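(* Let $\mathbf R=\{R_i,t_i\}_{i\ge0}$ be a preperfectoid tower arising from a pair $(R,I_0)$ such that every $R_i$ is $I_0$-adically separated (i.e. $\bigcap_n I_0^nR_i=0$). Then every $t_i$ is injective and every $R_i$ is reduced.
   Context: Fix a prime $p$; rings are commutative with $1$. For a ring $A$, an ideal $I$ and an $A$-module $M$, $M_{I\text{-tor}}$ is the submodule of $x\in M$ such that for every $a\in I$ some $a^nx=0$; $\varphi_{I,A}\colon A_{I\text{-tor}}\to A/IA$ is inclusion followed by projection. $\varphi$ is absolute Frobenius. A tower of rings $\{R_i,t_i\}_{i\ge0}$ is a sequence of ring maps $R_0\xrightarrow{t_0}R_1\to\cdots$. For a ring $R$ and ideal $I_0$, write $\overline{R_i}=R_i/I_0R_i$, $\overline{t_i}$ the induced maps. A purely inseparable tower arising from $(R,I_0)$: (a) $R_0=R$, $p\in I_0$; (b) each $\overline{t_i}$ injective; (c) $\varphi(\overline{R_{i+1}})\subset\overline{t_i}(\overline{R_i})$; then $F_i\colon\overline{R_{i+1}}\to\overline{R_i}$ is the unique ring map with $\overline{t_i}\circ F_i=\varphi$. A preperfectoid tower is a purely inseparable tower with: (d) each $F_i$ surjective; (f) $I_0$ principal and a principal ideal $I_1\subset R_1$ with $I_1^p=I_0R_1$ and $\ker F_i=I_1\overline{R_{i+1}}$ for all $i$; (g) for all $i$, $I_0(R_i)_{I_0\text{-tor}}=0$ and a bijection $(F_i)_{\mathrm{tor}}\colon(R_{i+1})_{I_0\text{-tor}}\to(R_i)_{I_0\text{-tor}}$ with $\varphi_{I_0,R_i}\circ(F_i)_{\mathrm{tor}}=F_i\circ\varphi_{I_0,R_{i+1}}$.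 *)

theory Defs
  imports "HOL-Algebra.Algebra" "HOL-Algebra.Ideal_Product"
begin

text \<open>A tower R 0 -> R 1 -> ... is encoded by a family of rings R :: nat => 'a ring
  (all carriers inside one ambient type 'a) and maps t i : R i -> R (Suc i).\<close>

fun tcomp :: "(nat \<Rightarrow> 'a \<Rightarrow> 'a) \<Rightarrow> nat \<Rightarrow> nat \<Rightarrow> 'a \<Rightarrow> 'a" where
  "tcomp t j 0 = (\<lambda>x. x)"
| "tcomp t j (Suc n) = t (j + n) \<circ> tcomp t j n"

fun idl_pow :: "('a, 'b) ring_scheme \<Rightarrow> 'a set \<Rightarrow> nat \<Rightarrow> 'a set" where
  "idl_pow R I 0 = carrier R"
| "idl_pow R I (Suc n) = I \<cdot>\<^bsub>R\<^esub> idl_pow R I n"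

definition ext0 :: "(nat \<Rightarrow> 'a ring) \<Rightarrow> (nat \<Rightarrow> 'a \<Rightarrow> 'a) \<Rightarrow> 'a set \<Rightarrow> nat \<Rightarrow> 'a set" where
  "ext0 R t I i = Idl\<^bsub>R i\<^esub> (tcomp t 0 i ` I)"

definition ext1 :: "(nat \<Rightarrow> 'a ring) \<Rightarrow> (nat \<Rightarrow> 'a \<Rightarrow> 'a) \<Rightarrow> 'a set \<Rightarrow> nat \<Rightarrow> 'a set" where
  "ext1 R t I i = Idl\<^bsub>R (Suc i)\<^esub> (tcomp t 1 i ` I)"

definition tor :: "('a, 'b) ring_scheme \<Rightarrow> 'a set \<Rightarrow> 'a set" where
  "tor A I = {x \<in> carrier A. \<forall>a\<in>I. \<exists>n::nat. a [^]\<^bsub>A\<^esub> n \<otimes>\<^bsub>A\<^esub> x = \<zero>\<^bsub>A\<^esub>}"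

text \<open>frob_rel p R t I0 i y x means F_i(class of y) = class of x, i.e.
  t_i(x) = y^p in R_{i+1}/I_0R_{i+1}.  (Since the induced maps on quotients are
  injective, this is exactly the graph of the map F_i.)\<close>
definition frob_rel :: "nat \<Rightarrow> (nat \<Rightarrow> 'a ring) \<Rightarrow> (nat \<Rightarrow> 'a \<Rightarrow> 'a) \<Rightarrow> 'a set \<Rightarrow> nat \<Rightarrow> 'a \<Rightarrow> 'a \<Rightarrow> bool" where
  "frob_rel p R t I0 i y x \<longleftrightarrow>
     t i x \<ominus>\<^bsub>R (Suc i)\<^esub> (y [^]\<^bsub>R (Suc i)\<^esub> p) \<in> ext0 R t I0 (Suc i)"

definition purely_inseparable_tower ::
  "nat \<Rightarrow> (nat \<Rightarrow> 'a ring) \<Rightarrow> (nat \<Rightarrow> 'a \<Rightarrow> 'a) \<Rightarrow> 'a set \<Rightarrow> bool" where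
  "purely_inseparable_tower p R t I0 \<longleftrightarrow>
     Factorial_Ring.prime p \<and>
     (\<forall>i. cring (R i)) \<and>
     (\<forall>i. t i \<in> ring_hom (R i) (R (Suc i))) \<and>
     ideal I0 (R 0) \<and>
     [p] \<cdot>\<^bsub>R 0\<^esub> \<one>\<^bsub>R 0\<^esub> \<in> I0 \<and>
     \<comment> \<open>(b) the induced maps R_i/I_0R_i -> R_{i+1}/I_0R_{i+1} are injective\<close>
     (\<forall>i. \<forall>x\<in>carrier (R i). t i x \<in> ext0 R t I0 (Suc i) \<longrightarrow> x \<in> ext0 R t I0 i) \<and>
     \<comment> \<open>(c) Frobenius of R_{i+1}/I_0 lands in the image of R_i/I_0\<close>
     (\<forall>i. \<forall>y\<in>carrier (R (Suc i)). \<exists>x\<in>carrier (R i). frob_rel p R t I0 i y x)"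

definition preperfectoid_tower ::
  "nat \<Rightarrow> (nat \<Rightarrow> 'a ring) \<Rightarrow> (nat \<Rightarrow> 'a \<Rightarrow> 'a) \<Rightarrow> 'a set \<Rightarrow> bool" where
  "preperfectoid_tower p R t I0 \<longleftrightarrow>
     purely_inseparable_tower p R t I0 \<and>
     \<comment> \<open>(d) each F_i is surjective\<close>
     (\<forall>i. \<forall>x\<in>carrier (R i). \<exists>y\<in>carrier (R (Suc i)). frob_rel p R t I0 i y x) \<and>
     \<comment> \<open>(f)\<close>
     (\<exists>f\<in>carrier (R 0). I0 = PIdl\<^bsub>R 0\<^esub> f) \<and>
     (\<exists>I1. (\<exists>g\<in>carrier (R 1). I1 = PIdl\<^bsub>R 1\<^esub> g) \<and>
           idl_pow (R 1) I1 p = ext0 R t I0 1 \<and>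
           (\<forall>i. \<forall>y\<in>carrier (R (Suc i)).
              frob_rel p R t I0 i y \<zero>\<^bsub>R i\<^esub> \<longleftrightarrow>
              y \<in> ext1 R t I1 i <+>\<^bsub>R (Suc i)\<^esub> ext0 R t I0 (Suc i))) \<and>
     \<comment> \<open>(g)\<close>
     (\<forall>i. \<forall>a\<in>I0. \<forall>x\<in>tor (R i) (ext0 R t I0 i).
        tcomp t 0 i a \<otimes>\<^bsub>R i\<^esub> x = \<zero>\<^bsub>R i\<^esub>) \<and>
     (\<exists>Ftor. \<forall>i.
        bij_betw (Ftor i) (tor (R (Suc i)) (ext0 R t I0 (Suc i))) (tor (R i) (ext0 R t I0 i)) \<and>
        (\<forall>y\<in>tor (R (Suc i)) (ext0 R t I0 (Suc i)). frob_rel p R t I0 i y (Ftor i y)))"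

end

theory Submission
  imports Defs "HOL-Computational_Algebra.Primes"
begin

lemma (in cring) binom_expand:
  assumes a: "a \<in> carrier R" and b: "b \<in> carrier R"
  shows "(a \<oplus> b) [^] (n::nat) = (\<Oplus>k\<in>{..n}. add_pow R (n choose k) (a [^] k \<otimes> b [^] (n - k)))"
proof (induction n)
  case 0
  then show ?case using a b by simp
next
  case (Suc n)
  define T where "T m k = add_pow R (m choose k) (a[^]k \<otimes> b[^](m-k))" for m k
  define U where "U k = add_pow R (n choose k) (a[^]k \<otimes> b[^](Suc n-k))" for k
  define V where "V i = add_pow R (n choose Suc i) (a[^]Suc i \<otimes> b[^](n-i))" for i
  have Tc: "T m k \<in> carrier R" for m k using a b by (simp add: T_def)
  have Uc: "U k \<in> carrier R" for k using a b by (simp add: U_def)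
  have Vc: "V k \<in> carrier R" for k using a b by (simp add: V_def)
  have S: "(a \<oplus> b) [^] n = (\<Oplus>k\<in>{..n}. T n k)" using Suc by (simp add: T_def)
  have Sc: "(\<Oplus>k\<in>{..n}. T n k) \<in> carrier R" using Tc by simp
  have "(a \<oplus> b) [^] Suc n = (\<Oplus>k\<in>{..n}. T n k) \<otimes> a \<oplus> (\<Oplus>k\<in>{..n}. T n k) \<otimes> b"
    using S Sc a b by (simp add: r_distr)
  also have "(\<Oplus>k\<in>{..n}. T n k) \<otimes> a = (\<Oplus>k\<in>{..n}. T n k \<otimes> a)"
    using Tc a by (simp add: finsum_ldistr)
  also have "(\<Oplus>k\<in>{..n}. T n k) \<otimes> b = (\<Oplus>k\<in>{..n}. U k)"
  proof -
    have "(\<Oplus>k\<in>{..n}. T n k) \<otimes> b = (\<Oplus>k\<in>{..n}. T n k \<otimes> b)"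
      using Tc b by (simp add: finsum_ldistr)
    also have "\<dots> = (\<Oplus>k\<in>{..n}. U k)"
    proof (rule finsum_cong')
      fix k assume k: "k \<in> {..n}"
      have e: "b [^] (n - k) \<otimes> b = b [^] (Suc n - k)"
        using k b by (simp add: Suc_diff_le nat_pow_Suc)
      show "T n k \<otimes> b = U k"
        unfolding T_def U_def using a b e
        by (simp add: add_pow_ldistr m_assoc)
    qed (auto simp: Uc)
    finally show ?thesis .
  qed
  also have "(\<Oplus>k\<in>{..n}. U k) = (\<Oplus>i\<in>{..n}. V i) \<oplus> T (Suc n) 0"
  proof -
    have "(\<Oplus>k\<in>{..Suc n}. U k) = U (Suc n) \<oplus> (\<Oplus>k\<in>{..n}. U k)"
      using Uc by simp
    also have "U (Suc n) = \<zero>" by (simp add: U_def binomial_eq_0)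
    finally have 1: "(\<Oplus>k\<in>{..Suc n}. U k) = (\<Oplus>k\<in>{..n}. U k)" using Uc by simp
    have "(\<Oplus>k\<in>{..Suc n}. U k) = (\<Oplus>i\<in>{..n}. U (Suc i)) \<oplus> U 0"
      by (rule finsum_Suc2) (auto simp: Uc)
    also have "(\<Oplus>i\<in>{..n}. U (Suc i)) = (\<Oplus>i\<in>{..n}. V i)"
      by (rule finsum_cong') (auto simp: U_def V_def a b)
    also have "U 0 = T (Suc n) 0" by (simp add: U_def T_def)
    finally show ?thesis using 1 by simp
  qed
  also have "(\<Oplus>k\<in>{..n}. T n k \<otimes> a) \<oplus> ((\<Oplus>i\<in>{..n}. V i) \<oplus> T (Suc n) 0)
      = ((\<Oplus>k\<in>{..n}. T n k \<otimes> a) \<oplus> (\<Oplus>i\<in>{..n}. V i)) \<oplus> T (Suc n) 0"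
    using Tc Vc a by (simp add: a_assoc)
  also have "(\<Oplus>k\<in>{..n}. T n k \<otimes> a) \<oplus> (\<Oplus>i\<in>{..n}. V i) = (\<Oplus>i\<in>{..n}. T (Suc n) (Suc i))"
  proof -
    have "(\<Oplus>k\<in>{..n}. T n k \<otimes> a) \<oplus> (\<Oplus>i\<in>{..n}. V i) = (\<Oplus>i\<in>{..n}. T n i \<otimes> a \<oplus> V i)"
      using Tc Vc a by (simp add: finsum_addf)
    also have "\<dots> = (\<Oplus>i\<in>{..n}. T (Suc n) (Suc i))"
    proof (rule finsum_cong')
      fix i assume i: "i \<in> {..n}"
      have X: "a [^] Suc i \<otimes> b [^] (n - i) \<in> carrier R" using a b by simp
      have "T n i \<otimes> a = add_pow R (n choose i) (a [^] Suc i \<otimes> b [^] (n - i))"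
        unfolding T_def using a b by (simp add: add_pow_ldistr add_pow_rdistr m_assoc m_comm m_lcomm nat_pow_Suc)
      then show "T n i \<otimes> a \<oplus> V i = T (Suc n) (Suc i)"
        unfolding V_def T_def using X by (simp add: add.nat_pow_mult)
    qed (auto simp: Tc)
    finally show ?thesis .
  qed
  also have "(\<Oplus>i\<in>{..n}. T (Suc n) (Suc i)) \<oplus> T (Suc n) 0 = (\<Oplus>k\<in>{..Suc n}. T (Suc n) k)"
    by (rule finsum_Suc2[symmetric]) (auto simp: Tc)
  finally show ?case by (simp add: T_def)
qed

lemma (in cring) freshman:
  assumes p: "Factorial_Ring.prime (p::nat)" and a: "a \<in> carrier R" and v: "v \<in> carrier R"
    and pv: "add_pow R p v = \<zero>"
  shows "(a \<oplus> v) [^] p = a [^] p \<oplus> v [^] p"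
proof -
  define T where "T k = add_pow R (p choose k) (a[^]k \<otimes> v[^](p-k))" for k
  have Tc: "T k \<in> carrier R" for k using a v by (simp add: T_def)
  obtain r where r: "p = Suc (Suc r)" using prime_ge_2_nat[OF p]
    by (metis add_2_eq_Suc le_Suc_ex)
  have mid: "T (Suc i) = \<zero>" if i: "i \<le> r" for i
  proof -
    have "p dvd (p choose Suc i)" using p r i by (intro dvd_choose_prime) auto
    then obtain m where m: "p choose Suc i = p * m" by (auto elim!: dvdE)
    have e: "v [^] (p - Suc i) = v [^] (p - Suc (Suc i)) \<otimes> v"
      using i r v by (simp add: Suc_diff_le)
    have "T (Suc i) = add_pow R (p * m) ((a[^]Suc i \<otimes> v [^] (p - Suc (Suc i))) \<otimes> v)"
      unfolding T_def m e using a v by (simp add: m_assoc)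
    also have "\<dots> = (a[^]Suc i \<otimes> v [^] (p - Suc (Suc i))) \<otimes> add_pow R (p * m) v"
      using a v by (simp add: add_pow_rdistr)
    also have "add_pow R (p * m) v = add_pow R m (add_pow R p v)"
      using v by (simp add: add.nat_pow_pow)
    also have "\<dots> = \<zero>" using pv by simp
    finally show ?thesis using a v by simp
  qed
  have "(a \<oplus> v) [^] p = (\<Oplus>k\<in>{..Suc (Suc r)}. T k)"
    using binom_expand[OF a v, of p] r by (simp add: T_def)
  also have "\<dots> = T (Suc (Suc r)) \<oplus> (\<Oplus>k\<in>{..Suc r}. T k)"
    using Tc by simp
  also have "(\<Oplus>k\<in>{..Suc r}. T k) = (\<Oplus>i\<in>{..r}. T (Suc i)) \<oplus> T 0"
    by (rule finsum_Suc2) (auto simp: Tc)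
  also have "(\<Oplus>i\<in>{..r}. T (Suc i)) = (\<Oplus>i\<in>{..r}. \<zero>)"
    by (rule finsum_cong') (auto simp: mid)
  also have "T (Suc (Suc r)) = a [^] p" using a v r by (simp add: T_def)
  also have "T 0 = v [^] p" using a v r by (simp add: T_def)
  finally show ?thesis using a v by simp
qed

lemma PIdl_iff: "x \<in> PIdl\<^bsub>A\<^esub> a \<longleftrightarrow> (\<exists>c\<in>carrier A. x = c \<otimes>\<^bsub>A\<^esub> a)"
  by (auto simp: cgenideal_def)

lemma tcomp_hom:
  assumes "\<And>i. t i \<in> ring_hom (R i) (R (Suc i))"
  shows "tcomp t j n \<in> ring_hom (R j) (R (j + n))"
proof (induction n)
  case 0
  then show ?case using id_ring_hom[of "R j"] by (simp add: id_def)
next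
  case (Suc n)
  then show ?case using ring_hom_trans[OF Suc assms[of "j+n"]]
    by (simp only: tcomp.simps add_Suc_right)
qed

lemma tcomp_0_Suc: "tcomp t 0 (Suc i) x = tcomp t 1 i (t 0 x)"
  by (induction i) auto

lemma Idl_image_PIdl:
  assumes A: "cring A" and B: "cring B" and h: "h \<in> ring_hom A B" and a: "a \<in> carrier A"
  shows "Idl\<^bsub>B\<^esub> (h ` (PIdl\<^bsub>A\<^esub> a)) = PIdl\<^bsub>B\<^esub> (h a)"
proof -
  interpret A: cring A by (rule A)
  interpret B: cring B by (rule B)
  have ha: "h a \<in> carrier B" using h a by (rule ring_hom_closed)
  have sub: "h ` (PIdl\<^bsub>A\<^esub> a) \<subseteq> PIdl\<^bsub>B\<^esub> (h a)"
  proof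
    fix y assume "y \<in> h ` (PIdl\<^bsub>A\<^esub> a)"
    then obtain c where c: "c \<in> carrier A" "y = h (c \<otimes>\<^bsub>A\<^esub> a)"
      by (auto simp: PIdl_iff)
    then have "y = h c \<otimes>\<^bsub>B\<^esub> h a" using ring_hom_mult[OF h] a by simp
    then show "y \<in> PIdl\<^bsub>B\<^esub> (h a)" using c ring_hom_closed[OF h] by (auto simp: PIdl_iff)
  qed
  have subc: "h ` (PIdl\<^bsub>A\<^esub> a) \<subseteq> carrier B"
    using sub B.cgenideal_ideal[OF ha] by (meson ideal.Icarr subset_iff)
  show ?thesis
  proof
    show "Idl\<^bsub>B\<^esub> (h ` (PIdl\<^bsub>A\<^esub> a)) \<subseteq> PIdl\<^bsub>B\<^esub> (h a)"
      by (rule B.genideal_minimal[OF B.cgenideal_ideal[OF ha] sub])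
    have "h a \<in> h ` (PIdl\<^bsub>A\<^esub> a)" using A.cgenideal_self[OF a] by blast
    then have "h a \<in> Idl\<^bsub>B\<^esub> (h ` (PIdl\<^bsub>A\<^esub> a))" using B.genideal_self[OF subc] by blast
    then show "PIdl\<^bsub>B\<^esub> (h a) \<subseteq> Idl\<^bsub>B\<^esub> (h ` (PIdl\<^bsub>A\<^esub> a))"
      by (rule B.cgenideal_minimal[OF B.genideal_ideal[OF subc]])
  qed
qed

lemma idl_pow_PIdl:
  assumes A: "cring A" and a: "a \<in> carrier A"
  shows "idl_pow A (PIdl\<^bsub>A\<^esub> a) n = PIdl\<^bsub>A\<^esub> (a [^]\<^bsub>A\<^esub> n)"
proof (induction n)
  interpret A: cring A by (rule A)
  case 0
  show ?case by (auto simp: PIdl_iff)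
next
  interpret A: cring A by (rule A)
  case (Suc n)
  have an: "a [^]\<^bsub>A\<^esub> n \<in> carrier A" using a by simp
  have "idl_pow A (PIdl\<^bsub>A\<^esub> a) (Suc n) = (PIdl\<^bsub>A\<^esub> a) \<cdot>\<^bsub>A\<^esub> (PIdl\<^bsub>A\<^esub> (a [^]\<^bsub>A\<^esub> n))"
    using Suc by simp
  also have "\<dots> = Idl\<^bsub>A\<^esub> (PIdl\<^bsub>A\<^esub> (a \<otimes>\<^bsub>A\<^esub> a [^]\<^bsub>A\<^esub> n))"
    using A.ideal_prod_eq_genideal[OF A.cgenideal_ideal[OF a] A.cgenideal_ideal[OF an]]
      A.cgenideal_prod[OF a an] by simp
  also have "\<dots> = PIdl\<^bsub>A\<^esub> (a \<otimes>\<^bsub>A\<^esub> a [^]\<^bsub>A\<^esub> n)"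
  proof -
    have I: "ideal (PIdl\<^bsub>A\<^esub> (a \<otimes>\<^bsub>A\<^esub> a [^]\<^bsub>A\<^esub> n)) A"
      using a an by (simp add: A.cgenideal_ideal)
    have c: "PIdl\<^bsub>A\<^esub> (a \<otimes>\<^bsub>A\<^esub> a [^]\<^bsub>A\<^esub> n) \<subseteq> carrier A"
      using ideal.Icarr[OF I] by blast
    show ?thesis
      using A.genideal_minimal[OF I] A.genideal_self[OF c] by blast
  qed
  also have "a \<otimes>\<^bsub>A\<^esub> a [^]\<^bsub>A\<^esub> n = a [^]\<^bsub>A\<^esub> Suc n"
    using a by (simp add: A.m_comm)
  finally show ?case .
qed

lemma hom_add_pow:
  assumes A: "ring A" and B: "ring B" and h: "h \<in> ring_hom A B" and x: "x \<in> carrier A"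
  shows "h (add_pow A (n::nat) x) = add_pow B n (h x)"
proof (induction n)
  interpret A: ring A by (rule A)
  interpret B: ring B by (rule B)
  case 0
  then show ?case using ring_hom_zero[OF h A B] by simp
next
  interpret A: ring A by (rule A)
  interpret B: ring B by (rule B)
  case (Suc n)
  then show ?case using x ring_hom_add[OF h] by (simp add: A.add.nat_pow_Suc B.add.nat_pow_Suc)
qed

lemma ideal_neg:
  assumes I: "ideal I A" and A: "ring A" and x: "x \<in> carrier A" and nx: "\<ominus>\<^bsub>A\<^esub> x \<in> I"
  shows "x \<in> I"
proof -
  interpret ideal I A by (rule I)
  have "\<ominus>\<^bsub>A\<^esub> (\<ominus>\<^bsub>A\<^esub> x) \<in> I" by (rule additive_subgroup.a_inv_closed[OF ideal.axioms(1)[OF I] nx])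
  then show ?thesis using x by simp
qed

lemma (in cring) aux1:
  "xa \<in> carrier R \<Longrightarrow> ya \<in> carrier R \<Longrightarrow> v \<in> carrier R \<Longrightarrow> c \<in> carrier R \<Longrightarrow>
   xa \<otimes> ya \<otimes> (v \<oplus> c \<otimes> ya) = xa \<otimes> (ya \<otimes> v) \<oplus> c \<otimes> (xa \<otimes> ya \<otimes> ya)"
  by algebra

lemma (in cring) orth_pow:
  assumes x: "x \<in> carrier R" and y: "y \<in> carrier R" and xy: "x \<otimes> y = \<zero>"
  shows "(x \<oplus> y) [^] Suc n = x [^] Suc n \<oplus> y [^] Suc n"
proof (induction n)
  case 0
  then show ?case using x y by simp
next
  case (Suc n)
  have xn: "x [^] n \<in> carrier R" and yn: "y [^] n \<in> carrier R" using x y by auto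
  have "(x \<oplus> y) [^] Suc (Suc n) = (x [^] n \<otimes> x \<oplus> y [^] n \<otimes> y) \<otimes> (x \<oplus> y)"
    using Suc x y by (simp del: nat_pow_Suc add: nat_pow_Suc[of _ "Suc n"])
  also have "\<dots> = x [^] n \<otimes> x \<otimes> x \<oplus> y [^] n \<otimes> y \<otimes> y \<oplus> (x [^] n \<otimes> (x \<otimes> y) \<oplus> y [^] n \<otimes> (x \<otimes> y))"
    using xn yn x y by algebra
  also have "\<dots> = x [^] Suc (Suc n) \<oplus> y [^] Suc (Suc n)"
    using xn yn x y xy by simp
  finally show ?case .
qed

locale PT =
  fixes p :: nat and R :: "nat \<Rightarrow> 'a ring" and t :: "nat \<Rightarrow> 'a \<Rightarrow> 'a"
    and f :: 'a and g :: 'a and Ftor :: "nat \<Rightarrow> 'a \<Rightarrow> 'a"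
  assumes prime: "Factorial_Ring.prime p"
    and cr: "\<And>i. cring (R i)"
    and hom: "\<And>i. t i \<in> ring_hom (R i) (R (Suc i))"
    and fc: "f \<in> carrier (R 0)"
    and gc: "g \<in> carrier (R 1)"
    and pI: "add_pow (R 0) p \<one>\<^bsub>R 0\<^esub> \<in> PIdl\<^bsub>R 0\<^esub> f"
    and bI: "\<And>i x. x \<in> carrier (R i) \<Longrightarrow> t i x \<in> PIdl\<^bsub>R (Suc i)\<^esub> (tcomp t 0 (Suc i) f)
               \<Longrightarrow> x \<in> PIdl\<^bsub>R i\<^esub> (tcomp t 0 i f)"
    and dI: "\<And>i x. x \<in> carrier (R i) \<Longrightarrow> \<exists>y\<in>carrier (R (Suc i)).
               t i x \<ominus>\<^bsub>R (Suc i)\<^esub> y [^]\<^bsub>R (Suc i)\<^esub> p \<in> PIdl\<^bsub>R (Suc i)\<^esub> (tcomp t 0 (Suc i) f)"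
    and gpI: "PIdl\<^bsub>R 1\<^esub> (g [^]\<^bsub>R 1\<^esub> p) = PIdl\<^bsub>R 1\<^esub> (tcomp t 0 1 f)"
    and kerI: "\<And>i y. y \<in> carrier (R (Suc i)) \<Longrightarrow>
               (t i \<zero>\<^bsub>R i\<^esub> \<ominus>\<^bsub>R (Suc i)\<^esub> y [^]\<^bsub>R (Suc i)\<^esub> p \<in> PIdl\<^bsub>R (Suc i)\<^esub> (tcomp t 0 (Suc i) f))
               = (y \<in> (PIdl\<^bsub>R (Suc i)\<^esub> (tcomp t 1 i g)) <+>\<^bsub>R (Suc i)\<^esub> (PIdl\<^bsub>R (Suc i)\<^esub> (tcomp t 0 (Suc i) f)))"
    and torI: "\<And>i x. x \<in> tor (R i) (PIdl\<^bsub>R i\<^esub> (tcomp t 0 i f)) \<Longrightarrow> tcomp t 0 i f \<otimes>\<^bsub>R i\<^esub> x = \<zero>\<^bsub>R i\<^esub>"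
    and bijI: "\<And>i. bij_betw (Ftor i) (tor (R (Suc i)) (PIdl\<^bsub>R (Suc i)\<^esub> (tcomp t 0 (Suc i) f)))
                 (tor (R i) (PIdl\<^bsub>R i\<^esub> (tcomp t 0 i f)))"
    and FtorI: "\<And>i y. y \<in> tor (R (Suc i)) (PIdl\<^bsub>R (Suc i)\<^esub> (tcomp t 0 (Suc i) f)) \<Longrightarrow>
               t i (Ftor i y) \<ominus>\<^bsub>R (Suc i)\<^esub> y [^]\<^bsub>R (Suc i)\<^esub> p \<in> PIdl\<^bsub>R (Suc i)\<^esub> (tcomp t 0 (Suc i) f)"
    and sepI: "\<And>i. (\<Inter>n. PIdl\<^bsub>R i\<^esub> (tcomp t 0 i f [^]\<^bsub>R i\<^esub> (n::nat))) = {\<zero>\<^bsub>R i\<^esub>}"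

context PT
begin

declare tcomp.simps(2)[simp del]

abbreviation F where "F i \<equiv> tcomp t 0 i f"
abbreviation G where "G i \<equiv> tcomp t 1 i g"
abbreviation Tor where "Tor i x \<equiv> x \<in> carrier (R i) \<and> F i \<otimes>\<^bsub>R i\<^esub> x = \<zero>\<^bsub>R i\<^esub>"

lemma p2: "p \<ge> 2" using prime prime_ge_2_nat by blast

lemma tc: "tcomp t j n \<in> ring_hom (R j) (R (j + n))"
  by (rule tcomp_hom[of t R, OF hom])

lemma Rhom: "ring_hom_cring (R i) (R (Suc i)) (t i)"
  unfolding ring_hom_cring_def ring_hom_cring_axioms_def using cr hom by auto

lemma Fc: "F i \<in> carrier (R i)"
  using ring_hom_closed[OF tc[of 0 i] fc] by simp

lemma Gc: "G i \<in> carrier (R (Suc i))"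
  using ring_hom_closed[OF tc[of 1 i] gc] by simp

lemma tF[simp]: "t i (F i) = F (Suc i)" by (simp add: tcomp.simps)
lemma tG[simp]: "t (Suc i) (G i) = G (Suc i)" by (simp add: tcomp.simps)
lemma tG'[simp]: "t (Suc i) (tcomp t (Suc 0) i g) = tcomp t (Suc 0) (Suc i) g" by (simp add: tcomp.simps)

lemma tor_iff: "x \<in> tor (R i) (PIdl\<^bsub>R i\<^esub> (F i)) \<longleftrightarrow> Tor i x"
proof
  assume "x \<in> tor (R i) (PIdl\<^bsub>R i\<^esub> (F i))"
  then show "Tor i x" using torI by (auto simp: tor_def)
next
  interpret A: cring "R i" by (rule cr)
  assume x: "Tor i x"
  show "x \<in> tor (R i) (PIdl\<^bsub>R i\<^esub> (F i))"
    unfolding tor_def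
  proof (safe)
    show "x \<in> carrier (R i)" using x by simp
    fix a assume "a \<in> PIdl\<^bsub>R i\<^esub> (F i)"
    then obtain c where c: "c \<in> carrier (R i)" "a = c \<otimes>\<^bsub>R i\<^esub> F i" by (auto simp: PIdl_iff)
    have "a [^]\<^bsub>R i\<^esub> (1::nat) \<otimes>\<^bsub>R i\<^esub> x = c \<otimes>\<^bsub>R i\<^esub> (F i \<otimes>\<^bsub>R i\<^esub> x)"
      using c x Fc[of i] by (simp add: A.m_assoc)
    also have "\<dots> = \<zero>\<^bsub>R i\<^esub>" using x c by simp
    finally show "\<exists>n::nat. a [^]\<^bsub>R i\<^esub> n \<otimes>\<^bsub>R i\<^esub> x = \<zero>\<^bsub>R i\<^esub>" by blast
  qed
qed

lemma tor_pow:
  assumes x: "x \<in> carrier (R i)" and e: "F i [^]\<^bsub>R i\<^esub> (n::nat) \<otimes>\<^bsub>R i\<^esub> x = \<zero>\<^bsub>R i\<^esub>"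
  shows "F i \<otimes>\<^bsub>R i\<^esub> x = \<zero>\<^bsub>R i\<^esub>"
proof -
  interpret A: cring "R i" by (rule cr)
  have "x \<in> tor (R i) (PIdl\<^bsub>R i\<^esub> (F i))"
    unfolding tor_def
  proof (safe)
    show "x \<in> carrier (R i)" by (rule x)
    fix a assume "a \<in> PIdl\<^bsub>R i\<^esub> (F i)"
    then obtain c where c: "c \<in> carrier (R i)" "a = c \<otimes>\<^bsub>R i\<^esub> F i" by (auto simp: PIdl_iff)
    have "a [^]\<^bsub>R i\<^esub> n \<otimes>\<^bsub>R i\<^esub> x = c [^]\<^bsub>R i\<^esub> n \<otimes>\<^bsub>R i\<^esub> (F i [^]\<^bsub>R i\<^esub> n \<otimes>\<^bsub>R i\<^esub> x)"
      using c x Fc[of i] by (simp add: A.m_assoc A.nat_pow_distrib)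
    then show "\<exists>n::nat. a [^]\<^bsub>R i\<^esub> n \<otimes>\<^bsub>R i\<^esub> x = \<zero>\<^bsub>R i\<^esub>" using e c by auto
  qed
  then show ?thesis using torI by blast
qed

lemma T_PIdl:
  assumes x: "Tor i x" and xi: "x \<in> PIdl\<^bsub>R i\<^esub> (F i)"
  shows "x = \<zero>\<^bsub>R i\<^esub>"
proof -
  interpret A: cring "R i" by (rule cr)
  obtain c where c: "c \<in> carrier (R i)" "x = c \<otimes>\<^bsub>R i\<^esub> F i" using xi by (auto simp: PIdl_iff)
  have "F i [^]\<^bsub>R i\<^esub> (2::nat) \<otimes>\<^bsub>R i\<^esub> c = F i \<otimes>\<^bsub>R i\<^esub> x"
    using c Fc[of i] by (simp add: numeral_2_eq_2 A.m_ac)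
  then have "F i \<otimes>\<^bsub>R i\<^esub> c = \<zero>\<^bsub>R i\<^esub>" using tor_pow[OF c(1)] x by simp
  then show ?thesis using c Fc[of i] by (simp add: A.m_comm)
qed

lemma pF: "\<exists>c\<in>carrier (R i). add_pow (R i) p \<one>\<^bsub>R i\<^esub> = c \<otimes>\<^bsub>R i\<^esub> F i"
proof -
  obtain c where c: "c \<in> carrier (R 0)" "add_pow (R 0) p \<one>\<^bsub>R 0\<^esub> = c \<otimes>\<^bsub>R 0\<^esub> f"
    using pI by (auto simp: PIdl_iff)
  have h: "tcomp t 0 i \<in> ring_hom (R 0) (R i)" using tc[of 0 i] by simp
  have "tcomp t 0 i (add_pow (R 0) p \<one>\<^bsub>R 0\<^esub>) = add_pow (R i) p \<one>\<^bsub>R i\<^esub>"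
    using hom_add_pow[OF cring.axioms(1)[OF cr] cring.axioms(1)[OF cr] h, of "\<one>\<^bsub>R 0\<^esub>"]
      ring_hom_one[OF h] cring.axioms(1)[OF cr, THEN ring.ring_simprules(6)] by simp
  moreover have "tcomp t 0 i (c \<otimes>\<^bsub>R 0\<^esub> f) = tcomp t 0 i c \<otimes>\<^bsub>R i\<^esub> F i"
    using ring_hom_mult[OF h c(1) fc] .
  ultimately show ?thesis using c ring_hom_closed[OF h c(1)] by metis
qed

lemma pT: assumes v: "Tor i v" shows "add_pow (R i) p v = \<zero>\<^bsub>R i\<^esub>"
proof -
  interpret A: cring "R i" by (rule cr)
  obtain c where c: "c \<in> carrier (R i)" "add_pow (R i) p \<one>\<^bsub>R i\<^esub> = c \<otimes>\<^bsub>R i\<^esub> F i"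
    using pF by blast
  have "add_pow (R i) p v = add_pow (R i) p \<one>\<^bsub>R i\<^esub> \<otimes>\<^bsub>R i\<^esub> v"
    using v by (simp add: A.add_pow_ldistr)
  also have "\<dots> = c \<otimes>\<^bsub>R i\<^esub> (F i \<otimes>\<^bsub>R i\<^esub> v)" using c v Fc[of i] by (simp add: A.m_assoc)
  finally show ?thesis using v c by simp
qed

lemma Tor_diff: "Tor i a \<Longrightarrow> Tor i b \<Longrightarrow> Tor i (a \<ominus>\<^bsub>R i\<^esub> b)"
proof -
  interpret A: cring "R i" by (rule cr)
  assume a: "Tor i a" and b: "Tor i b"
  have "F i \<otimes>\<^bsub>R i\<^esub> (a \<ominus>\<^bsub>R i\<^esub> b) = F i \<otimes>\<^bsub>R i\<^esub> a \<ominus>\<^bsub>R i\<^esub> F i \<otimes>\<^bsub>R i\<^esub> b"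
    using a[THEN conjunct1] b[THEN conjunct1] Fc[of i] by algebra
  also have "\<dots> = \<zero>\<^bsub>R i\<^esub> \<ominus>\<^bsub>R i\<^esub> \<zero>\<^bsub>R i\<^esub>" using a b by (simp only:)
  also have "\<dots> = \<zero>\<^bsub>R i\<^esub>" by simp
  finally have e: "F i \<otimes>\<^bsub>R i\<^esub> (a \<ominus>\<^bsub>R i\<^esub> b) = \<zero>\<^bsub>R i\<^esub>" .
  have "a \<ominus>\<^bsub>R i\<^esub> b \<in> carrier (R i)" using a b by simp
  then show ?thesis using e by blast
qed

lemma Tor_mult: "Tor i a \<Longrightarrow> c \<in> carrier (R i) \<Longrightarrow> Tor i (c \<otimes>\<^bsub>R i\<^esub> a)"
proof -
  interpret A: cring "R i" by (rule cr)
  assume a: "Tor i a" and c: "c \<in> carrier (R i)"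
  have "F i \<otimes>\<^bsub>R i\<^esub> (c \<otimes>\<^bsub>R i\<^esub> a) = c \<otimes>\<^bsub>R i\<^esub> (F i \<otimes>\<^bsub>R i\<^esub> a)"
    using a c Fc[of i] by (simp add: A.m_lcomm)
  then show ?thesis using a c by simp
qed

lemma Tor_pow: "Tor i a \<Longrightarrow> n \<ge> 1 \<Longrightarrow> Tor i (a [^]\<^bsub>R i\<^esub> (n::nat))"
proof -
  interpret A: cring "R i" by (rule cr)
  assume a: "Tor i a" and n: "n \<ge> 1"
  then obtain m where m: "n = Suc m" by (cases n) auto
  have "a [^]\<^bsub>R i\<^esub> n = a [^]\<^bsub>R i\<^esub> m \<otimes>\<^bsub>R i\<^esub> a" using m by simp
  then show ?thesis using Tor_mult[OF a, of "a [^]\<^bsub>R i\<^esub> m"] a by simp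
qed

lemma Tor_t: "Tor i x \<Longrightarrow> Tor (Suc i) (t i x)"
proof -
  interpret h: ring_hom_cring "R i" "R (Suc i)" "t i" by (rule Rhom)
  assume x: "Tor i x"
  have "F (Suc i) \<otimes>\<^bsub>R (Suc i)\<^esub> t i x = t i (F i \<otimes>\<^bsub>R i\<^esub> x)" using x[THEN conjunct1] Fc[of i] by simp
  also have "\<dots> = t i \<zero>\<^bsub>R i\<^esub>" using x by (simp only:)
  also have "\<dots> = \<zero>\<^bsub>R (Suc i)\<^esub>" by simp
  finally have e: "F (Suc i) \<otimes>\<^bsub>R (Suc i)\<^esub> t i x = \<zero>\<^bsub>R (Suc i)\<^esub>" .
  have "t i x \<in> carrier (R (Suc i))" using x by simp
  then show ?thesis using e by blast
qed

lemma Ftor_eq: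
  assumes y: "Tor (Suc i) y"
  shows "Tor i (Ftor i y) \<and> t i (Ftor i y) = y [^]\<^bsub>R (Suc i)\<^esub> p"
proof -
  interpret B: cring "R (Suc i)" by (rule cr)
  have yt: "y \<in> tor (R (Suc i)) (PIdl\<^bsub>R (Suc i)\<^esub> (F (Suc i)))" using y tor_iff by blast
  have T1: "Tor i (Ftor i y)" using bij_betwE[OF bijI[of i]] yt tor_iff by blast
  have T2: "Tor (Suc i) (t i (Ftor i y))" using Tor_t[OF T1] .
  have T3: "Tor (Suc i) (y [^]\<^bsub>R (Suc i)\<^esub> p)" using Tor_pow[OF y] p2 by simp
  have "t i (Ftor i y) \<ominus>\<^bsub>R (Suc i)\<^esub> y [^]\<^bsub>R (Suc i)\<^esub> p = \<zero>\<^bsub>R (Suc i)\<^esub>"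
    using T_PIdl[OF Tor_diff[OF T2 T3] FtorI[OF yt]] .
  then have "t i (Ftor i y) = y [^]\<^bsub>R (Suc i)\<^esub> p" using T2 T3 by simp
  then show ?thesis using T1 by simp
qed

lemma GpF: "\<exists>u\<in>carrier (R (Suc i)). G i [^]\<^bsub>R (Suc i)\<^esub> p = u \<otimes>\<^bsub>R (Suc i)\<^esub> F (Suc i)"
  and FGp: "\<exists>v\<in>carrier (R (Suc i)). F (Suc i) = v \<otimes>\<^bsub>R (Suc i)\<^esub> G i [^]\<^bsub>R (Suc i)\<^esub> p"
proof -
  interpret A: cring "R 1" by (rule cr)
  have h0: "tcomp t 1 i \<in> ring_hom (R 1) (R (Suc i))" using tc[of 1 i] by simp
  interpret h: ring_hom_cring "R 1" "R (Suc i)" "tcomp t 1 i"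
    unfolding ring_hom_cring_def ring_hom_cring_axioms_def using cr h0 by auto
  have F1: "F 1 \<in> carrier (R 1)" using Fc[of 1] .
  have gp: "g [^]\<^bsub>R 1\<^esub> p \<in> carrier (R 1)" using A.nat_pow_closed[OF gc] .
  have "g [^]\<^bsub>R 1\<^esub> p \<in> PIdl\<^bsub>R 1\<^esub> (F 1)" using gpI A.cgenideal_self[OF gp] by argo
  then obtain u where u: "u \<in> carrier (R 1)" "g [^]\<^bsub>R 1\<^esub> p = u \<otimes>\<^bsub>R 1\<^esub> F 1"
    unfolding PIdl_iff by blast
  have "F 1 \<in> PIdl\<^bsub>R 1\<^esub> (g [^]\<^bsub>R 1\<^esub> p)" using gpI A.cgenideal_self[OF F1] by argo
  then obtain v where v: "v \<in> carrier (R 1)" "F 1 = v \<otimes>\<^bsub>R 1\<^esub> g [^]\<^bsub>R 1\<^esub> p"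
    unfolding PIdl_iff by blast
  have f1: "F 1 = t 0 f" unfolding One_nat_def tcomp.simps by simp
  have e: "tcomp t 1 i (F 1) = F (Suc i)" unfolding f1 by (rule tcomp_0_Suc[symmetric])
  have hp: "tcomp t 1 i (g [^]\<^bsub>R 1\<^esub> p) = G i [^]\<^bsub>R (Suc i)\<^esub> p"
    by (rule h.hom_pow[OF gc])
  have "G i [^]\<^bsub>R (Suc i)\<^esub> p = tcomp t 1 i u \<otimes>\<^bsub>R (Suc i)\<^esub> F (Suc i)"
    using hp u(2) ring_hom_mult[OF h0 u(1) F1] e by argo
  then show "\<exists>u\<in>carrier (R (Suc i)). G i [^]\<^bsub>R (Suc i)\<^esub> p = u \<otimes>\<^bsub>R (Suc i)\<^esub> F (Suc i)"
    using ring_hom_closed[OF h0 u(1)] by blast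
  have "F (Suc i) = tcomp t 1 i v \<otimes>\<^bsub>R (Suc i)\<^esub> G i [^]\<^bsub>R (Suc i)\<^esub> p"
    using hp v(2) ring_hom_mult[OF h0 v(1) gp] e by argo
  then show "\<exists>v\<in>carrier (R (Suc i)). F (Suc i) = v \<otimes>\<^bsub>R (Suc i)\<^esub> G i [^]\<^bsub>R (Suc i)\<^esub> p"
    using ring_hom_closed[OF h0 v(1)] by blast
qed

lemma G_sum:
  assumes y: "y \<in> (PIdl\<^bsub>R (Suc i)\<^esub> (G i)) <+>\<^bsub>R (Suc i)\<^esub> (PIdl\<^bsub>R (Suc i)\<^esub> (F (Suc i)))"
  shows "\<exists>c\<in>carrier (R (Suc i)). y = c \<otimes>\<^bsub>R (Suc i)\<^esub> G i"
proof -
  interpret B: cring "R (Suc i)" by (rule cr)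
  obtain v where v: "v \<in> carrier (R (Suc i))" "F (Suc i) = v \<otimes>\<^bsub>R (Suc i)\<^esub> G i [^]\<^bsub>R (Suc i)\<^esub> p"
    using FGp by blast
  obtain q where q: "p = Suc q" using p2 by (cases p) auto
  obtain a b where ab: "a \<in> PIdl\<^bsub>R (Suc i)\<^esub> (G i)" "b \<in> PIdl\<^bsub>R (Suc i)\<^esub> (F (Suc i))"
    "y = a \<oplus>\<^bsub>R (Suc i)\<^esub> b"
    using y by (auto simp: set_add_def')
  obtain c1 where c1: "c1 \<in> carrier (R (Suc i))" "a = c1 \<otimes>\<^bsub>R (Suc i)\<^esub> G i" using ab by (auto simp: PIdl_iff)
  obtain c2 where c2: "c2 \<in> carrier (R (Suc i))" "b = c2 \<otimes>\<^bsub>R (Suc i)\<^esub> F (Suc i)" using ab by (auto simp: PIdl_iff)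
  have Gc': "G i \<in> carrier (R (Suc i))" using Gc .
  have Gq: "G i [^]\<^bsub>R (Suc i)\<^esub> q \<in> carrier (R (Suc i))" using Gc' by simp
  have Gp: "G i [^]\<^bsub>R (Suc i)\<^esub> p = G i [^]\<^bsub>R (Suc i)\<^esub> q \<otimes>\<^bsub>R (Suc i)\<^esub> G i" using q by simp
  have "y = c1 \<otimes>\<^bsub>R (Suc i)\<^esub> G i \<oplus>\<^bsub>R (Suc i)\<^esub> c2 \<otimes>\<^bsub>R (Suc i)\<^esub> (v \<otimes>\<^bsub>R (Suc i)\<^esub> (G i [^]\<^bsub>R (Suc i)\<^esub> q \<otimes>\<^bsub>R (Suc i)\<^esub> G i))"
    using ab c1 c2 v Gp by simp
  also have "\<dots> = (c1 \<oplus>\<^bsub>R (Suc i)\<^esub> c2 \<otimes>\<^bsub>R (Suc i)\<^esub> v \<otimes>\<^bsub>R (Suc i)\<^esub> G i [^]\<^bsub>R (Suc i)\<^esub> q) \<otimes>\<^bsub>R (Suc i)\<^esub> G i"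
    using c1(1) c2(1) v(1) Gq Gc' by (simp add: B.m_assoc B.l_distr)
  finally have "y = (c1 \<oplus>\<^bsub>R (Suc i)\<^esub> c2 \<otimes>\<^bsub>R (Suc i)\<^esub> v \<otimes>\<^bsub>R (Suc i)\<^esub> G i [^]\<^bsub>R (Suc i)\<^esub> q) \<otimes>\<^bsub>R (Suc i)\<^esub> G i" .
  then show ?thesis using c1 c2 v Gc' by auto
qed

lemma sum_G:
  assumes c: "c \<in> carrier (R (Suc i))"
  shows "c \<otimes>\<^bsub>R (Suc i)\<^esub> G i \<in> (PIdl\<^bsub>R (Suc i)\<^esub> (G i)) <+>\<^bsub>R (Suc i)\<^esub> (PIdl\<^bsub>R (Suc i)\<^esub> (F (Suc i)))"
proof -
  interpret B: cring "R (Suc i)" by (rule cr)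
  have a: "c \<otimes>\<^bsub>R (Suc i)\<^esub> G i \<in> PIdl\<^bsub>R (Suc i)\<^esub> (G i)" using c by (auto simp: PIdl_iff)
  have b: "\<zero>\<^bsub>R (Suc i)\<^esub> \<in> PIdl\<^bsub>R (Suc i)\<^esub> (F (Suc i))"
    using Fc[of "Suc i"] by (auto simp: PIdl_iff intro!: bexI[of _ "\<zero>\<^bsub>R (Suc i)\<^esub>"])
  have "c \<otimes>\<^bsub>R (Suc i)\<^esub> G i = c \<otimes>\<^bsub>R (Suc i)\<^esub> G i \<oplus>\<^bsub>R (Suc i)\<^esub> \<zero>\<^bsub>R (Suc i)\<^esub>"
    using c Gc by simp
  then show ?thesis using a b unfolding set_add_def' by blast
qed

lemma GT:
  assumes s: "Tor (Suc i) s"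
  shows "G i \<otimes>\<^bsub>R (Suc i)\<^esub> s = \<zero>\<^bsub>R (Suc i)\<^esub>"
proof -
  interpret B: cring "R (Suc i)" by (rule cr)
  interpret h: ring_hom_cring "R i" "R (Suc i)" "t i" by (rule Rhom)
  define y where "y = G i \<otimes>\<^bsub>R (Suc i)\<^esub> s"
  have y: "Tor (Suc i) y" unfolding y_def using Tor_mult[OF s Gc] .
  have "y \<in> (PIdl\<^bsub>R (Suc i)\<^esub> (G i)) <+>\<^bsub>R (Suc i)\<^esub> (PIdl\<^bsub>R (Suc i)\<^esub> (F (Suc i)))"
    unfolding y_def using sum_G[of s i] s Gc by (simp add: B.m_comm)
  then have "t i \<zero>\<^bsub>R i\<^esub> \<ominus>\<^bsub>R (Suc i)\<^esub> y [^]\<^bsub>R (Suc i)\<^esub> p \<in> PIdl\<^bsub>R (Suc i)\<^esub> (F (Suc i))"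
    using iffD2[OF kerI[of y i]] y by blast
  then have "\<ominus>\<^bsub>R (Suc i)\<^esub> (y [^]\<^bsub>R (Suc i)\<^esub> p) \<in> PIdl\<^bsub>R (Suc i)\<^esub> (F (Suc i))"
    using y by (simp add: B.minus_eq)
  then have "y [^]\<^bsub>R (Suc i)\<^esub> p \<in> PIdl\<^bsub>R (Suc i)\<^esub> (F (Suc i))"
    using ideal_neg[OF B.cgenideal_ideal[OF Fc] B.ring_axioms] y by simp
  then have "t i (Ftor i y) \<in> PIdl\<^bsub>R (Suc i)\<^esub> (F (Suc i))" using Ftor_eq[OF y] by simp
  then have "Ftor i y \<in> PIdl\<^bsub>R i\<^esub> (F i)" using bI[of "Ftor i y" i] Ftor_eq[OF y] by blast
  then have e1: "Ftor i y = \<zero>\<^bsub>R i\<^esub>" using T_PIdl Ftor_eq[OF y] by blast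
  have z: "Tor (Suc i) \<zero>\<^bsub>R (Suc i)\<^esub>" using Fc[of "Suc i"] by simp
  have "t i (Ftor i \<zero>\<^bsub>R (Suc i)\<^esub>) = \<zero>\<^bsub>R (Suc i)\<^esub>" using Ftor_eq[OF z] p2 by (simp add: B.nat_pow_zero)
  then have "t i (Ftor i \<zero>\<^bsub>R (Suc i)\<^esub>) \<in> PIdl\<^bsub>R (Suc i)\<^esub> (F (Suc i))"
    using Fc[of "Suc i"] by (auto simp: PIdl_iff intro!: bexI[of _ "\<zero>\<^bsub>R (Suc i)\<^esub>"])
  then have "Ftor i \<zero>\<^bsub>R (Suc i)\<^esub> \<in> PIdl\<^bsub>R i\<^esub> (F i)" using bI[of "Ftor i \<zero>\<^bsub>R (Suc i)\<^esub>" i] Ftor_eq[OF z] by blast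
  then have e2: "Ftor i \<zero>\<^bsub>R (Suc i)\<^esub> = \<zero>\<^bsub>R i\<^esub>" using T_PIdl Ftor_eq[OF z] by blast
  have inj: "inj_on (Ftor i) (tor (R (Suc i)) (PIdl\<^bsub>R (Suc i)\<^esub> (F (Suc i))))"
    using bijI[of i] by (rule bij_betw_imp_inj_on)
  have yt: "y \<in> tor (R (Suc i)) (PIdl\<^bsub>R (Suc i)\<^esub> (F (Suc i)))" using y tor_iff by blast
  have zt: "\<zero>\<^bsub>R (Suc i)\<^esub> \<in> tor (R (Suc i)) (PIdl\<^bsub>R (Suc i)\<^esub> (F (Suc i)))" using z tor_iff by blast
  have "y = \<zero>\<^bsub>R (Suc i)\<^esub>" using e1 e2 by (intro inj_onD[OF inj _ yt zt]) simp
  then show ?thesis by (simp add: y_def)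
qed

lemma Qlem:
  assumes w: "w \<in> carrier (R (Suc i))" and s: "Tor (Suc i) s" and d: "d \<in> carrier (R (Suc i))"
    and e: "w [^]\<^bsub>R (Suc i)\<^esub> p = s \<oplus>\<^bsub>R (Suc i)\<^esub> d \<otimes>\<^bsub>R (Suc i)\<^esub> F (Suc i)"
  shows "\<exists>s'. Tor (Suc i) s' \<and> (\<exists>c\<in>carrier (R (Suc i)). w = s' \<oplus>\<^bsub>R (Suc i)\<^esub> c \<otimes>\<^bsub>R (Suc i)\<^esub> G i)"
proof -
  interpret B: cring "R (Suc i)" by (rule cr)
  interpret C: cring "R (Suc (Suc i))" by (rule cr)
  interpret h: ring_hom_cring "R (Suc i)" "R (Suc (Suc i))" "t (Suc i)" by (rule Rhom)
  have sc: "s \<in> carrier (R (Suc i))" using s by simp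
  have FBc: "F (Suc i) \<in> carrier (R (Suc i))" by (rule Fc)
  have FCc: "F (Suc (Suc i)) \<in> carrier (R (Suc (Suc i)))" by (rule Fc)
  have GBc: "G i \<in> carrier (R (Suc i))" by (rule Gc)
  have GCc: "G (Suc i) \<in> carrier (R (Suc (Suc i)))" by (rule Gc)
  \<comment> \<open>step 1: the torsion p-th root of s one level up\<close>
  have st: "s \<in> tor (R (Suc i)) (PIdl\<^bsub>R (Suc i)\<^esub> (F (Suc i)))" using s tor_iff by blast
  have "s \<in> Ftor (Suc i) ` tor (R (Suc (Suc i))) (PIdl\<^bsub>R (Suc (Suc i))\<^esub> (F (Suc (Suc i))))"
    using bij_betw_imp_surj_on[OF bijI[of "Suc i"]] st by simp
  then obtain v where vt: "v \<in> tor (R (Suc (Suc i))) (PIdl\<^bsub>R (Suc (Suc i))\<^esub> (F (Suc (Suc i))))"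
    and vs: "Ftor (Suc i) v = s" by blast
  have v: "Tor (Suc (Suc i)) v" using vt tor_iff by blast
  have vc: "v \<in> carrier (R (Suc (Suc i)))" using v by simp
  have tv: "t (Suc i) s = v [^]\<^bsub>R (Suc (Suc i))\<^esub> p" using Ftor_eq[OF v] vs by simp
  \<comment> \<open>step 2: t w - v has p-th power in F\<close>
  define a where "a = t (Suc i) w"
  have ac: "a \<in> carrier (R (Suc (Suc i)))" unfolding a_def using w by simp
  define b where "b = a \<ominus>\<^bsub>R (Suc (Suc i))\<^esub> v"
  have bc: "b \<in> carrier (R (Suc (Suc i)))" unfolding b_def using ac vc by simp
  have ab: "a = b \<oplus>\<^bsub>R (Suc (Suc i))\<^esub> v" unfolding b_def using ac vc by algebra
  have fr: "a [^]\<^bsub>R (Suc (Suc i))\<^esub> p = b [^]\<^bsub>R (Suc (Suc i))\<^esub> p \<oplus>\<^bsub>R (Suc (Suc i))\<^esub> v [^]\<^bsub>R (Suc (Suc i))\<^esub> p"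
    unfolding ab by (rule C.freshman[OF prime bc vc pT[OF v]])
  have "a [^]\<^bsub>R (Suc (Suc i))\<^esub> p = t (Suc i) (w [^]\<^bsub>R (Suc i)\<^esub> p)" unfolding a_def using w by simp
  also have "\<dots> = t (Suc i) s \<oplus>\<^bsub>R (Suc (Suc i))\<^esub> t (Suc i) d \<otimes>\<^bsub>R (Suc (Suc i))\<^esub> F (Suc (Suc i))"
    unfolding e using sc d FBc by simp
  finally have ap: "a [^]\<^bsub>R (Suc (Suc i))\<^esub> p = v [^]\<^bsub>R (Suc (Suc i))\<^esub> p \<oplus>\<^bsub>R (Suc (Suc i))\<^esub> t (Suc i) d \<otimes>\<^bsub>R (Suc (Suc i))\<^esub> F (Suc (Suc i))"
    unfolding tv .
  have tdc: "t (Suc i) d \<in> carrier (R (Suc (Suc i)))" using d by simp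
  have bpc: "b [^]\<^bsub>R (Suc (Suc i))\<^esub> p \<in> carrier (R (Suc (Suc i)))" using bc by simp
  have vpc: "v [^]\<^bsub>R (Suc (Suc i))\<^esub> p \<in> carrier (R (Suc (Suc i)))" using vc by simp
  have bp: "b [^]\<^bsub>R (Suc (Suc i))\<^esub> p = t (Suc i) d \<otimes>\<^bsub>R (Suc (Suc i))\<^esub> F (Suc (Suc i))"
  proof -
    have "b [^]\<^bsub>R (Suc (Suc i))\<^esub> p = (b [^]\<^bsub>R (Suc (Suc i))\<^esub> p \<oplus>\<^bsub>R (Suc (Suc i))\<^esub> v [^]\<^bsub>R (Suc (Suc i))\<^esub> p) \<ominus>\<^bsub>R (Suc (Suc i))\<^esub> v [^]\<^bsub>R (Suc (Suc i))\<^esub> p"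
      using bpc vpc by algebra
    also have "\<dots> = (v [^]\<^bsub>R (Suc (Suc i))\<^esub> p \<oplus>\<^bsub>R (Suc (Suc i))\<^esub> t (Suc i) d \<otimes>\<^bsub>R (Suc (Suc i))\<^esub> F (Suc (Suc i))) \<ominus>\<^bsub>R (Suc (Suc i))\<^esub> v [^]\<^bsub>R (Suc (Suc i))\<^esub> p"
      using fr ap by simp
    also have "\<dots> = t (Suc i) d \<otimes>\<^bsub>R (Suc (Suc i))\<^esub> F (Suc (Suc i))"
      using vpc tdc FCc by algebra
    finally show ?thesis .
  qed
  have "t (Suc i) \<zero>\<^bsub>R (Suc i)\<^esub> \<ominus>\<^bsub>R (Suc (Suc i))\<^esub> b [^]\<^bsub>R (Suc (Suc i))\<^esub> p
        = (\<ominus>\<^bsub>R (Suc (Suc i))\<^esub> t (Suc i) d) \<otimes>\<^bsub>R (Suc (Suc i))\<^esub> F (Suc (Suc i))"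
    unfolding bp using tdc FCc by simp algebra
  then have "t (Suc i) \<zero>\<^bsub>R (Suc i)\<^esub> \<ominus>\<^bsub>R (Suc (Suc i))\<^esub> b [^]\<^bsub>R (Suc (Suc i))\<^esub> p
        \<in> PIdl\<^bsub>R (Suc (Suc i))\<^esub> (F (Suc (Suc i)))"
    using tdc unfolding PIdl_iff by blast
  then have "b \<in> (PIdl\<^bsub>R (Suc (Suc i))\<^esub> (G (Suc i))) <+>\<^bsub>R (Suc (Suc i))\<^esub> (PIdl\<^bsub>R (Suc (Suc i))\<^esub> (F (Suc (Suc i))))"
    using iffD1[OF kerI[of b "Suc i"]] bc by blast
  then obtain c where c: "c \<in> carrier (R (Suc (Suc i)))" "b = c \<otimes>\<^bsub>R (Suc (Suc i))\<^esub> G (Suc i)"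
    using G_sum by blast
  have a2: "a = v \<oplus>\<^bsub>R (Suc (Suc i))\<^esub> c \<otimes>\<^bsub>R (Suc (Suc i))\<^esub> G (Suc i)"
    using ab c vc GCc by (simp add: C.a_comm)
  \<comment> \<open>step 4: multiply by G^(p-1) and descend\<close>
  obtain q where q: "p = Suc (Suc q)" using p2 by (metis add_2_eq_Suc le_Suc_ex)
  define r where "r = G i [^]\<^bsub>R (Suc i)\<^esub> Suc q \<otimes>\<^bsub>R (Suc i)\<^esub> w"
  have rc: "r \<in> carrier (R (Suc i))" unfolding r_def using w GBc by simp
  have GCv: "G (Suc i) \<otimes>\<^bsub>R (Suc (Suc i))\<^esub> v = \<zero>\<^bsub>R (Suc (Suc i))\<^esub>" using GT[OF v] .
  obtain u where u: "u \<in> carrier (R (Suc (Suc i)))"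
    "G (Suc i) [^]\<^bsub>R (Suc (Suc i))\<^esub> p = u \<otimes>\<^bsub>R (Suc (Suc i))\<^esub> F (Suc (Suc i))"
    using GpF by blast
  have GCq: "G (Suc i) [^]\<^bsub>R (Suc (Suc i))\<^esub> q \<in> carrier (R (Suc (Suc i)))" using GCc by simp
  have "t (Suc i) r = G (Suc i) [^]\<^bsub>R (Suc (Suc i))\<^esub> Suc q \<otimes>\<^bsub>R (Suc (Suc i))\<^esub> a"
    unfolding r_def a_def using w GBc by simp
  also have "\<dots> = G (Suc i) [^]\<^bsub>R (Suc (Suc i))\<^esub> q \<otimes>\<^bsub>R (Suc (Suc i))\<^esub> (G (Suc i) \<otimes>\<^bsub>R (Suc (Suc i))\<^esub> v)
      \<oplus>\<^bsub>R (Suc (Suc i))\<^esub> c \<otimes>\<^bsub>R (Suc (Suc i))\<^esub> (G (Suc i) [^]\<^bsub>R (Suc (Suc i))\<^esub> q \<otimes>\<^bsub>R (Suc (Suc i))\<^esub> G (Suc i) \<otimes>\<^bsub>R (Suc (Suc i))\<^esub> G (Suc i))"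
    unfolding a2 C.nat_pow_Suc by (rule C.aux1) (use GCq GCc vc c(1) in simp_all)
  also have "\<dots> = c \<otimes>\<^bsub>R (Suc (Suc i))\<^esub> G (Suc i) [^]\<^bsub>R (Suc (Suc i))\<^esub> p"
    unfolding GCv q using GCq GCc c(1) by simp
  also have "\<dots> = (c \<otimes>\<^bsub>R (Suc (Suc i))\<^esub> u) \<otimes>\<^bsub>R (Suc (Suc i))\<^esub> F (Suc (Suc i))"
    unfolding u(2) using c(1) u(1) FCc by (simp add: C.m_assoc)
  finally have "t (Suc i) r \<in> PIdl\<^bsub>R (Suc (Suc i))\<^esub> (F (Suc (Suc i)))"
    using c(1) u(1) unfolding PIdl_iff by blast
  then have "r \<in> PIdl\<^bsub>R (Suc i)\<^esub> (F (Suc i))" using bI[OF rc] by simp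
  then obtain e1 where e1: "e1 \<in> carrier (R (Suc i))" "r = e1 \<otimes>\<^bsub>R (Suc i)\<^esub> F (Suc i)"
    unfolding PIdl_iff by blast
  obtain v2 where v2: "v2 \<in> carrier (R (Suc i))"
    "F (Suc i) = v2 \<otimes>\<^bsub>R (Suc i)\<^esub> G i [^]\<^bsub>R (Suc i)\<^esub> p"
    using FGp by blast
  define s' where "s' = w \<ominus>\<^bsub>R (Suc i)\<^esub> (e1 \<otimes>\<^bsub>R (Suc i)\<^esub> v2) \<otimes>\<^bsub>R (Suc i)\<^esub> G i"
  have s'c: "s' \<in> carrier (R (Suc i))" unfolding s'_def using w e1 v2 GBc by simp
  have GBq: "G i [^]\<^bsub>R (Suc i)\<^esub> Suc q \<in> carrier (R (Suc i))" using GBc by simp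
  have Gp': "G i [^]\<^bsub>R (Suc i)\<^esub> p = G i [^]\<^bsub>R (Suc i)\<^esub> Suc q \<otimes>\<^bsub>R (Suc i)\<^esub> G i"
    using q by simp
  have "G i [^]\<^bsub>R (Suc i)\<^esub> Suc q \<otimes>\<^bsub>R (Suc i)\<^esub> s'
      = r \<ominus>\<^bsub>R (Suc i)\<^esub> e1 \<otimes>\<^bsub>R (Suc i)\<^esub> (v2 \<otimes>\<^bsub>R (Suc i)\<^esub> (G i [^]\<^bsub>R (Suc i)\<^esub> Suc q \<otimes>\<^bsub>R (Suc i)\<^esub> G i))"
    unfolding s'_def r_def using w e1(1) v2(1) GBc GBq by algebra
  also have "\<dots> = \<zero>\<^bsub>R (Suc i)\<^esub>"
    unfolding Gp'[symmetric] v2(2)[symmetric] e1(2) using e1(1) FBc by simp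
  finally have z1: "G i [^]\<^bsub>R (Suc i)\<^esub> Suc q \<otimes>\<^bsub>R (Suc i)\<^esub> s' = \<zero>\<^bsub>R (Suc i)\<^esub>" .
  have "F (Suc i) \<otimes>\<^bsub>R (Suc i)\<^esub> s' = (v2 \<otimes>\<^bsub>R (Suc i)\<^esub> G i) \<otimes>\<^bsub>R (Suc i)\<^esub> (G i [^]\<^bsub>R (Suc i)\<^esub> Suc q \<otimes>\<^bsub>R (Suc i)\<^esub> s')"
    unfolding v2(2) Gp' using v2(1) GBc GBq s'c by algebra
  then have Ts': "Tor (Suc i) s'" using z1 s'c v2(1) GBc by simp
  have "w = s' \<oplus>\<^bsub>R (Suc i)\<^esub> (e1 \<otimes>\<^bsub>R (Suc i)\<^esub> v2) \<otimes>\<^bsub>R (Suc i)\<^esub> G i"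
    unfolding s'_def using w e1(1) v2(1) GBc by algebra
  then show ?thesis using Ts' e1(1) v2(1) by auto
qed

lemma Llem:
  assumes z: "z \<in> carrier (R i)" and s0: "Tor (Suc i) s0" and d0: "d0 \<in> carrier (R (Suc i))"
    and e: "t i z = s0 \<oplus>\<^bsub>R (Suc i)\<^esub> d0 \<otimes>\<^bsub>R (Suc i)\<^esub> F (Suc i)"
  shows "\<exists>\<sigma>. Tor i \<sigma> \<and> (\<exists>c\<in>carrier (R i). z = \<sigma> \<oplus>\<^bsub>R i\<^esub> c \<otimes>\<^bsub>R i\<^esub> F i)"
proof -
  interpret A: cring "R i" by (rule cr)
  interpret B: cring "R (Suc i)" by (rule cr)
  interpret h: ring_hom_cring "R i" "R (Suc i)" "t i" by (rule Rhom)
  have FAc: "F i \<in> carrier (R i)" by (rule Fc)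
  have FBc: "F (Suc i) \<in> carrier (R (Suc i))" by (rule Fc)
  have GBc: "G i \<in> carrier (R (Suc i))" by (rule Gc)
  have tzc: "t i z \<in> carrier (R (Suc i))" using z by simp
  have s0c: "s0 \<in> carrier (R (Suc i))" using s0 by simp
  obtain w where w: "w \<in> carrier (R (Suc i))"
    "t i z \<ominus>\<^bsub>R (Suc i)\<^esub> w [^]\<^bsub>R (Suc i)\<^esub> p \<in> PIdl\<^bsub>R (Suc i)\<^esub> (F (Suc i))"
    using dI[OF z] by blast
  obtain e2 where e2: "e2 \<in> carrier (R (Suc i))"
    "t i z \<ominus>\<^bsub>R (Suc i)\<^esub> w [^]\<^bsub>R (Suc i)\<^esub> p = e2 \<otimes>\<^bsub>R (Suc i)\<^esub> F (Suc i)"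
    using w(2) unfolding PIdl_iff by blast
  have wpc: "w [^]\<^bsub>R (Suc i)\<^esub> p \<in> carrier (R (Suc i))" using w by simp
  have "w [^]\<^bsub>R (Suc i)\<^esub> p = t i z \<ominus>\<^bsub>R (Suc i)\<^esub> (t i z \<ominus>\<^bsub>R (Suc i)\<^esub> w [^]\<^bsub>R (Suc i)\<^esub> p)"
    using tzc wpc by algebra
  also have "\<dots> = t i z \<ominus>\<^bsub>R (Suc i)\<^esub> e2 \<otimes>\<^bsub>R (Suc i)\<^esub> F (Suc i)"
    unfolding e2(2) ..
  also have "\<dots> = (s0 \<oplus>\<^bsub>R (Suc i)\<^esub> d0 \<otimes>\<^bsub>R (Suc i)\<^esub> F (Suc i)) \<ominus>\<^bsub>R (Suc i)\<^esub> e2 \<otimes>\<^bsub>R (Suc i)\<^esub> F (Suc i)"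
    unfolding e ..
  also have "\<dots> = s0 \<oplus>\<^bsub>R (Suc i)\<^esub> (d0 \<ominus>\<^bsub>R (Suc i)\<^esub> e2) \<otimes>\<^bsub>R (Suc i)\<^esub> F (Suc i)"
    using s0c d0 e2(1) FBc by algebra
  finally have wp: "w [^]\<^bsub>R (Suc i)\<^esub> p = s0 \<oplus>\<^bsub>R (Suc i)\<^esub> (d0 \<ominus>\<^bsub>R (Suc i)\<^esub> e2) \<otimes>\<^bsub>R (Suc i)\<^esub> F (Suc i)" .
  obtain s c where s: "Tor (Suc i) s" and c: "c \<in> carrier (R (Suc i))"
    and ws: "w = s \<oplus>\<^bsub>R (Suc i)\<^esub> c \<otimes>\<^bsub>R (Suc i)\<^esub> G i"
    using Qlem[OF w(1) s0 _ wp] d0 e2(1) by auto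
  have sc: "s \<in> carrier (R (Suc i))" using s by simp
  define \<sigma> where "\<sigma> = Ftor i s"
  have \<sigma>: "Tor i \<sigma>" and t\<sigma>: "t i \<sigma> = s [^]\<^bsub>R (Suc i)\<^esub> p" using Ftor_eq[OF s] \<sigma>_def by auto
  have \<sigma>c: "\<sigma> \<in> carrier (R i)" using \<sigma> by simp
  have cG: "c \<otimes>\<^bsub>R (Suc i)\<^esub> G i \<in> carrier (R (Suc i))" using c GBc by simp
  have orth: "s \<otimes>\<^bsub>R (Suc i)\<^esub> (c \<otimes>\<^bsub>R (Suc i)\<^esub> G i) = \<zero>\<^bsub>R (Suc i)\<^esub>"
  proof -
    have "s \<otimes>\<^bsub>R (Suc i)\<^esub> (c \<otimes>\<^bsub>R (Suc i)\<^esub> G i) = c \<otimes>\<^bsub>R (Suc i)\<^esub> (G i \<otimes>\<^bsub>R (Suc i)\<^esub> s)"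
      using sc c GBc by algebra
    then show ?thesis using GT[OF s] c by simp
  qed
  obtain q where q: "p = Suc q" using p2 by (cases p) auto
  obtain u where u: "u \<in> carrier (R (Suc i))"
    "G i [^]\<^bsub>R (Suc i)\<^esub> p = u \<otimes>\<^bsub>R (Suc i)\<^esub> F (Suc i)"
    using GpF by blast
  have "w [^]\<^bsub>R (Suc i)\<^esub> p = s [^]\<^bsub>R (Suc i)\<^esub> p \<oplus>\<^bsub>R (Suc i)\<^esub> (c \<otimes>\<^bsub>R (Suc i)\<^esub> G i) [^]\<^bsub>R (Suc i)\<^esub> p"
    unfolding ws q by (rule B.orth_pow[OF sc cG orth])
  also have "(c \<otimes>\<^bsub>R (Suc i)\<^esub> G i) [^]\<^bsub>R (Suc i)\<^esub> p = (c [^]\<^bsub>R (Suc i)\<^esub> p \<otimes>\<^bsub>R (Suc i)\<^esub> u) \<otimes>\<^bsub>R (Suc i)\<^esub> F (Suc i)"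
    using c GBc u FBc by (simp add: B.nat_pow_distrib B.m_assoc)
  finally have wp2: "w [^]\<^bsub>R (Suc i)\<^esub> p = s [^]\<^bsub>R (Suc i)\<^esub> p \<oplus>\<^bsub>R (Suc i)\<^esub> (c [^]\<^bsub>R (Suc i)\<^esub> p \<otimes>\<^bsub>R (Suc i)\<^esub> u) \<otimes>\<^bsub>R (Suc i)\<^esub> F (Suc i)" .
  have cpu: "c [^]\<^bsub>R (Suc i)\<^esub> p \<otimes>\<^bsub>R (Suc i)\<^esub> u \<in> carrier (R (Suc i))" using c u by simp
  have spc: "s [^]\<^bsub>R (Suc i)\<^esub> p \<in> carrier (R (Suc i))" using sc by simp
  have "t i (z \<ominus>\<^bsub>R i\<^esub> \<sigma>) = t i z \<ominus>\<^bsub>R (Suc i)\<^esub> s [^]\<^bsub>R (Suc i)\<^esub> p"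
    using z \<sigma>c t\<sigma> by (simp add: A.minus_eq B.minus_eq)
  also have "\<dots> = (t i z \<ominus>\<^bsub>R (Suc i)\<^esub> w [^]\<^bsub>R (Suc i)\<^esub> p) \<oplus>\<^bsub>R (Suc i)\<^esub> (w [^]\<^bsub>R (Suc i)\<^esub> p \<ominus>\<^bsub>R (Suc i)\<^esub> s [^]\<^bsub>R (Suc i)\<^esub> p)"
    using tzc wpc spc by algebra
  also have "\<dots> = e2 \<otimes>\<^bsub>R (Suc i)\<^esub> F (Suc i) \<oplus>\<^bsub>R (Suc i)\<^esub> (w [^]\<^bsub>R (Suc i)\<^esub> p \<ominus>\<^bsub>R (Suc i)\<^esub> s [^]\<^bsub>R (Suc i)\<^esub> p)"
    unfolding e2(2) ..
  also have "\<dots> = (e2 \<oplus>\<^bsub>R (Suc i)\<^esub> c [^]\<^bsub>R (Suc i)\<^esub> p \<otimes>\<^bsub>R (Suc i)\<^esub> u) \<otimes>\<^bsub>R (Suc i)\<^esub> F (Suc i)"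
    unfolding wp2 using e2(1) cpu spc FBc by algebra
  finally have "t i (z \<ominus>\<^bsub>R i\<^esub> \<sigma>) \<in> PIdl\<^bsub>R (Suc i)\<^esub> (F (Suc i))"
    using e2(1) cpu unfolding PIdl_iff by blast
  then have "z \<ominus>\<^bsub>R i\<^esub> \<sigma> \<in> PIdl\<^bsub>R i\<^esub> (F i)" using bI z \<sigma>c by simp
  then obtain c' where c': "c' \<in> carrier (R i)" "z \<ominus>\<^bsub>R i\<^esub> \<sigma> = c' \<otimes>\<^bsub>R i\<^esub> F i"
    unfolding PIdl_iff by blast
  have "z = \<sigma> \<oplus>\<^bsub>R i\<^esub> (z \<ominus>\<^bsub>R i\<^esub> \<sigma>)" using z \<sigma>c by algebra
  then have "z = \<sigma> \<oplus>\<^bsub>R i\<^esub> c' \<otimes>\<^bsub>R i\<^esub> F i" unfolding c'(2) .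
  then show ?thesis using \<sigma> c'(1) by blast
qed

lemma inj_step:
  assumes x: "x \<in> carrier (R i)" and tx: "t i x = \<zero>\<^bsub>R (Suc i)\<^esub>"
  shows "\<exists>x'\<in>carrier (R i). t i x' = \<zero>\<^bsub>R (Suc i)\<^esub> \<and> x = x' \<otimes>\<^bsub>R i\<^esub> F i"
proof -
  interpret A: cring "R i" by (rule cr)
  interpret B: cring "R (Suc i)" by (rule cr)
  interpret h: ring_hom_cring "R i" "R (Suc i)" "t i" by (rule Rhom)
  have FAc: "F i \<in> carrier (R i)" by (rule Fc)
  have FBc: "F (Suc i) \<in> carrier (R (Suc i))" by (rule Fc)
  have "t i x \<in> PIdl\<^bsub>R (Suc i)\<^esub> (F (Suc i))" unfolding tx PIdl_iff using FBc
    by (intro bexI[of _ "\<zero>\<^bsub>R (Suc i)\<^esub>"]) simp_all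
  then have "x \<in> PIdl\<^bsub>R i\<^esub> (F i)" using bI x by blast
  then obtain z where z: "z \<in> carrier (R i)" "x = z \<otimes>\<^bsub>R i\<^esub> F i" unfolding PIdl_iff by blast
  have tzc: "t i z \<in> carrier (R (Suc i))" using z by simp
  have "F (Suc i) \<otimes>\<^bsub>R (Suc i)\<^esub> t i z = t i x" using z FAc tzc FBc by (simp add: B.m_comm)
  then have Ttz: "Tor (Suc i) (t i z)" using tx tzc by simp
  have "t i z = t i z \<oplus>\<^bsub>R (Suc i)\<^esub> \<zero>\<^bsub>R (Suc i)\<^esub> \<otimes>\<^bsub>R (Suc i)\<^esub> F (Suc i)" using tzc FBc by simp
  then obtain \<sigma> c where \<sigma>: "Tor i \<sigma>" and c: "c \<in> carrier (R i)" and zs: "z = \<sigma> \<oplus>\<^bsub>R i\<^esub> c \<otimes>\<^bsub>R i\<^esub> F i"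
    using Llem[OF z(1) Ttz, of "\<zero>\<^bsub>R (Suc i)\<^esub>"] by auto
  have \<sigma>c: "\<sigma> \<in> carrier (R i)" using \<sigma> by simp
  have "x = \<sigma> \<otimes>\<^bsub>R i\<^esub> F i \<oplus>\<^bsub>R i\<^esub> (c \<otimes>\<^bsub>R i\<^esub> F i) \<otimes>\<^bsub>R i\<^esub> F i"
    unfolding z(2) zs using \<sigma>c c FAc by algebra
  also have "\<sigma> \<otimes>\<^bsub>R i\<^esub> F i = \<zero>\<^bsub>R i\<^esub>" using A.m_comm[OF \<sigma>c FAc] \<sigma> by simp
  finally have xe: "x = (c \<otimes>\<^bsub>R i\<^esub> F i) \<otimes>\<^bsub>R i\<^esub> F i" using c FAc by simp
  have tcc: "t i c \<in> carrier (R (Suc i))" using c by simp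
  have tz': "t i z = t i \<sigma> \<oplus>\<^bsub>R (Suc i)\<^esub> t i c \<otimes>\<^bsub>R (Suc i)\<^esub> F (Suc i)"
    unfolding zs using \<sigma>c c FAc by simp
  have t\<sigma>c: "t i \<sigma> \<in> carrier (R (Suc i))" using \<sigma>c by simp
  have "t i z \<ominus>\<^bsub>R (Suc i)\<^esub> t i \<sigma> = t i c \<otimes>\<^bsub>R (Suc i)\<^esub> F (Suc i)"
    unfolding tz' using t\<sigma>c tcc FBc by algebra
  moreover have "Tor (Suc i) (t i z \<ominus>\<^bsub>R (Suc i)\<^esub> t i \<sigma>)" using Tor_diff[OF Ttz Tor_t[OF \<sigma>]] .
  ultimately have "F (Suc i) \<otimes>\<^bsub>R (Suc i)\<^esub> (t i c \<otimes>\<^bsub>R (Suc i)\<^esub> F (Suc i)) = \<zero>\<^bsub>R (Suc i)\<^esub>" by simp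
  moreover have "F (Suc i) [^]\<^bsub>R (Suc i)\<^esub> (2::nat) \<otimes>\<^bsub>R (Suc i)\<^esub> t i c = F (Suc i) \<otimes>\<^bsub>R (Suc i)\<^esub> (t i c \<otimes>\<^bsub>R (Suc i)\<^esub> F (Suc i))"
    using tcc FBc by (simp add: numeral_2_eq_2 B.m_ac)
  ultimately have "F (Suc i) \<otimes>\<^bsub>R (Suc i)\<^esub> t i c = \<zero>\<^bsub>R (Suc i)\<^esub>" using tor_pow[OF tcc] by simp
  then have "t i (c \<otimes>\<^bsub>R i\<^esub> F i) = \<zero>\<^bsub>R (Suc i)\<^esub>" using c FAc tcc FBc by (simp add: B.m_comm)
  moreover have "c \<otimes>\<^bsub>R i\<^esub> F i \<in> carrier (R i)" using c FAc by simp
  ultimately show ?thesis using xe by blast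
qed

lemma t_inj:
  assumes x: "x \<in> carrier (R i)" and tx: "t i x = \<zero>\<^bsub>R (Suc i)\<^esub>"
  shows "x = \<zero>\<^bsub>R i\<^esub>"
proof -
  interpret A: cring "R i" by (rule cr)
  have FAc: "F i \<in> carrier (R i)" by (rule Fc)
  have "\<forall>x. x \<in> carrier (R i) \<longrightarrow> t i x = \<zero>\<^bsub>R (Suc i)\<^esub> \<longrightarrow> x \<in> PIdl\<^bsub>R i\<^esub> (F i [^]\<^bsub>R i\<^esub> n)" for n :: nat
  proof (induction n)
    case 0
    show ?case by (auto simp: PIdl_iff)
  next
    case (Suc n)
    show ?case
    proof (intro allI impI)
      fix x assume x: "x \<in> carrier (R i)" and tx: "t i x = \<zero>\<^bsub>R (Suc i)\<^esub>"
      obtain x' where x': "x' \<in> carrier (R i)" "t i x' = \<zero>\<^bsub>R (Suc i)\<^esub>" "x = x' \<otimes>\<^bsub>R i\<^esub> F i"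
        using inj_step[OF x tx] by blast
      obtain c where c: "c \<in> carrier (R i)" "x' = c \<otimes>\<^bsub>R i\<^esub> F i [^]\<^bsub>R i\<^esub> n"
        using Suc x' unfolding PIdl_iff by blast
      have "x = c \<otimes>\<^bsub>R i\<^esub> F i [^]\<^bsub>R i\<^esub> Suc n" using x'(3) c FAc by (simp add: A.m_assoc)
      then show "x \<in> PIdl\<^bsub>R i\<^esub> (F i [^]\<^bsub>R i\<^esub> Suc n)" using c(1) unfolding PIdl_iff by blast
    qed
  qed
  then have "x \<in> (\<Inter>n. PIdl\<^bsub>R i\<^esub> (F i [^]\<^bsub>R i\<^esub> (n::nat)))" using x tx by blast
  then show ?thesis using sepI[of i] by blast
qed

lemma red1:
  assumes x: "x \<in> carrier (R (Suc i))" and xp: "x [^]\<^bsub>R (Suc i)\<^esub> p = \<zero>\<^bsub>R (Suc i)\<^esub>"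
  shows "x = \<zero>\<^bsub>R (Suc i)\<^esub>"
proof -
  interpret B: cring "R (Suc i)" by (rule cr)
  interpret h: ring_hom_cring "R i" "R (Suc i)" "t i" by (rule Rhom)
  have FBc: "F (Suc i) \<in> carrier (R (Suc i))" by (rule Fc)
  have GBc: "G i \<in> carrier (R (Suc i))" by (rule Gc)
  obtain v where v: "v \<in> carrier (R (Suc i))" "F (Suc i) = v \<otimes>\<^bsub>R (Suc i)\<^esub> G i [^]\<^bsub>R (Suc i)\<^esub> p"
    using FGp by blast
  obtain u where u: "u \<in> carrier (R (Suc i))" "G i [^]\<^bsub>R (Suc i)\<^esub> p = u \<otimes>\<^bsub>R (Suc i)\<^esub> F (Suc i)"
    using GpF by blast
  have claim: "x \<in> PIdl\<^bsub>R (Suc i)\<^esub> (G i [^]\<^bsub>R (Suc i)\<^esub> Suc n)" for n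
  proof (induction n)
    case 0
    have "t i \<zero>\<^bsub>R i\<^esub> \<ominus>\<^bsub>R (Suc i)\<^esub> x [^]\<^bsub>R (Suc i)\<^esub> p = \<zero>\<^bsub>R (Suc i)\<^esub> \<otimes>\<^bsub>R (Suc i)\<^esub> F (Suc i)"
      unfolding xp using FBc by simp
    then have "t i \<zero>\<^bsub>R i\<^esub> \<ominus>\<^bsub>R (Suc i)\<^esub> x [^]\<^bsub>R (Suc i)\<^esub> p \<in> PIdl\<^bsub>R (Suc i)\<^esub> (F (Suc i))"
      unfolding PIdl_iff by blast
    then have "x \<in> (PIdl\<^bsub>R (Suc i)\<^esub> (G i)) <+>\<^bsub>R (Suc i)\<^esub> (PIdl\<^bsub>R (Suc i)\<^esub> (F (Suc i)))"
      using iffD1[OF kerI[OF x]] by blast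
    then obtain c where "c \<in> carrier (R (Suc i))" "x = c \<otimes>\<^bsub>R (Suc i)\<^esub> G i" using G_sum by blast
    then show ?case unfolding PIdl_iff using GBc by auto
  next
    case (Suc n)
    obtain c where c: "c \<in> carrier (R (Suc i))" "x = c \<otimes>\<^bsub>R (Suc i)\<^esub> G i [^]\<^bsub>R (Suc i)\<^esub> Suc n"
      using Suc unfolding PIdl_iff by blast
    have cpc: "c [^]\<^bsub>R (Suc i)\<^esub> p \<in> carrier (R (Suc i))" using c by simp
    have GNc: "G i [^]\<^bsub>R (Suc i)\<^esub> (Suc n * p) \<in> carrier (R (Suc i))" using GBc by simp
    have vnc: "v [^]\<^bsub>R (Suc i)\<^esub> Suc n \<in> carrier (R (Suc i))" using v by simp
    have x1: "x [^]\<^bsub>R (Suc i)\<^esub> p = c [^]\<^bsub>R (Suc i)\<^esub> p \<otimes>\<^bsub>R (Suc i)\<^esub> G i [^]\<^bsub>R (Suc i)\<^esub> (Suc n * p)"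
      unfolding c(2) using c(1) GBc by (simp add: B.nat_pow_distrib B.nat_pow_pow B.nat_pow_mult add.commute)
    have f1: "F (Suc i) [^]\<^bsub>R (Suc i)\<^esub> Suc n = v [^]\<^bsub>R (Suc i)\<^esub> Suc n \<otimes>\<^bsub>R (Suc i)\<^esub> G i [^]\<^bsub>R (Suc i)\<^esub> (Suc n * p)"
      unfolding v(2) B.nat_pow_distrib[OF v(1) B.nat_pow_closed[OF GBc]] B.nat_pow_pow[OF GBc]
        mult.commute[of p "Suc n"] ..
    have "F (Suc i) [^]\<^bsub>R (Suc i)\<^esub> Suc n \<otimes>\<^bsub>R (Suc i)\<^esub> c [^]\<^bsub>R (Suc i)\<^esub> p
        = v [^]\<^bsub>R (Suc i)\<^esub> Suc n \<otimes>\<^bsub>R (Suc i)\<^esub> (c [^]\<^bsub>R (Suc i)\<^esub> p \<otimes>\<^bsub>R (Suc i)\<^esub> G i [^]\<^bsub>R (Suc i)\<^esub> (Suc n * p))"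
      unfolding f1 using vnc GNc cpc by algebra
    also have "\<dots> = \<zero>\<^bsub>R (Suc i)\<^esub>" unfolding x1[symmetric] xp using vnc by simp
    finally have "F (Suc i) \<otimes>\<^bsub>R (Suc i)\<^esub> c [^]\<^bsub>R (Suc i)\<^esub> p = \<zero>\<^bsub>R (Suc i)\<^esub>"
      using tor_pow[OF cpc] by blast
    then have Tc: "Tor (Suc i) (c [^]\<^bsub>R (Suc i)\<^esub> p)" using cpc by simp
    have "c [^]\<^bsub>R (Suc i)\<^esub> p = c [^]\<^bsub>R (Suc i)\<^esub> p \<oplus>\<^bsub>R (Suc i)\<^esub> \<zero>\<^bsub>R (Suc i)\<^esub> \<otimes>\<^bsub>R (Suc i)\<^esub> F (Suc i)"
      using cpc FBc by simp
    then obtain s' e where s': "Tor (Suc i) s'" and e: "e \<in> carrier (R (Suc i))"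
      and cs: "c = s' \<oplus>\<^bsub>R (Suc i)\<^esub> e \<otimes>\<^bsub>R (Suc i)\<^esub> G i"
      using Qlem[OF c(1) Tc, of "\<zero>\<^bsub>R (Suc i)\<^esub>"] by auto
    have s'c: "s' \<in> carrier (R (Suc i))" using s' by simp
    have Gnc: "G i [^]\<^bsub>R (Suc i)\<^esub> n \<in> carrier (R (Suc i))" using GBc by simp
    have "x = (s' \<oplus>\<^bsub>R (Suc i)\<^esub> e \<otimes>\<^bsub>R (Suc i)\<^esub> G i) \<otimes>\<^bsub>R (Suc i)\<^esub> (G i [^]\<^bsub>R (Suc i)\<^esub> n \<otimes>\<^bsub>R (Suc i)\<^esub> G i)"
      unfolding c(2) cs by simp
    also have "\<dots> = (G i \<otimes>\<^bsub>R (Suc i)\<^esub> s') \<otimes>\<^bsub>R (Suc i)\<^esub> G i [^]\<^bsub>R (Suc i)\<^esub> n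
        \<oplus>\<^bsub>R (Suc i)\<^esub> e \<otimes>\<^bsub>R (Suc i)\<^esub> (G i [^]\<^bsub>R (Suc i)\<^esub> n \<otimes>\<^bsub>R (Suc i)\<^esub> G i \<otimes>\<^bsub>R (Suc i)\<^esub> G i)"
      using s'c e GBc Gnc by algebra
    also have "\<dots> = e \<otimes>\<^bsub>R (Suc i)\<^esub> G i [^]\<^bsub>R (Suc i)\<^esub> Suc (Suc n)"
      unfolding GT[OF s'] using e GBc Gnc by simp
    finally show ?case unfolding PIdl_iff using e by blast
  qed
  have "x \<in> PIdl\<^bsub>R (Suc i)\<^esub> (F (Suc i) [^]\<^bsub>R (Suc i)\<^esub> n)" for n :: nat
  proof -
    obtain c where c: "c \<in> carrier (R (Suc i))" "x = c \<otimes>\<^bsub>R (Suc i)\<^esub> G i [^]\<^bsub>R (Suc i)\<^esub> Suc (p * n)"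
      using claim[of "p * n"] unfolding PIdl_iff by blast
    have unc: "u [^]\<^bsub>R (Suc i)\<^esub> n \<in> carrier (R (Suc i))" using u by simp
    have Fnc: "F (Suc i) [^]\<^bsub>R (Suc i)\<^esub> n \<in> carrier (R (Suc i))" using FBc by simp
    have "G i [^]\<^bsub>R (Suc i)\<^esub> Suc (p * n) = (G i [^]\<^bsub>R (Suc i)\<^esub> p) [^]\<^bsub>R (Suc i)\<^esub> n \<otimes>\<^bsub>R (Suc i)\<^esub> G i"
      using GBc by (simp add: B.nat_pow_pow)
    also have "\<dots> = u [^]\<^bsub>R (Suc i)\<^esub> n \<otimes>\<^bsub>R (Suc i)\<^esub> F (Suc i) [^]\<^bsub>R (Suc i)\<^esub> n \<otimes>\<^bsub>R (Suc i)\<^esub> G i"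
      unfolding u(2) using u(1) FBc by (simp add: B.nat_pow_distrib)
    finally have "x = (c \<otimes>\<^bsub>R (Suc i)\<^esub> G i \<otimes>\<^bsub>R (Suc i)\<^esub> u [^]\<^bsub>R (Suc i)\<^esub> n) \<otimes>\<^bsub>R (Suc i)\<^esub> F (Suc i) [^]\<^bsub>R (Suc i)\<^esub> n"
      unfolding c(2) using c(1) GBc unc Fnc by (simp, algebra)
    then show ?thesis unfolding PIdl_iff using c(1) GBc unc by blast
  qed
  then have "x \<in> (\<Inter>n. PIdl\<^bsub>R (Suc i)\<^esub> (F (Suc i) [^]\<^bsub>R (Suc i)\<^esub> (n::nat)))" by blast
  then show ?thesis using sepI[of "Suc i"] by blast
qed

lemma redk:
  "x \<in> carrier (R (Suc i)) \<Longrightarrow> x [^]\<^bsub>R (Suc i)\<^esub> (p ^ k) = \<zero>\<^bsub>R (Suc i)\<^esub> \<Longrightarrow> x = \<zero>\<^bsub>R (Suc i)\<^esub>"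
proof (induction k arbitrary: x)
  case 0
  interpret B: cring "R (Suc i)" by (rule cr)
  show ?case using 0 by simp
next
  case (Suc k)
  interpret B: cring "R (Suc i)" by (rule cr)
  have "(x [^]\<^bsub>R (Suc i)\<^esub> (p ^ k)) [^]\<^bsub>R (Suc i)\<^esub> p = x [^]\<^bsub>R (Suc i)\<^esub> (p ^ Suc k)"
    using Suc.prems(1) by (simp add: B.nat_pow_pow mult.commute)
  then have "x [^]\<^bsub>R (Suc i)\<^esub> (p ^ k) = \<zero>\<^bsub>R (Suc i)\<^esub>"
    using red1[of "x [^]\<^bsub>R (Suc i)\<^esub> (p ^ k)" i] Suc.prems by simp
  then show ?case using Suc.IH Suc.prems(1) by blast
qed

lemma reduced:
  assumes x: "x \<in> carrier (R i)" and xm: "x [^]\<^bsub>R i\<^esub> (m::nat) = \<zero>\<^bsub>R i\<^esub>"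
  shows "x = \<zero>\<^bsub>R i\<^esub>"
proof -
  interpret A: cring "R i" by (rule cr)
  interpret B: cring "R (Suc i)" by (rule cr)
  interpret h: ring_hom_cring "R i" "R (Suc i)" "t i" by (rule Rhom)
  define y where "y = t i x"
  have yc: "y \<in> carrier (R (Suc i))" unfolding y_def using x by simp
  have ym: "y [^]\<^bsub>R (Suc i)\<^esub> m = \<zero>\<^bsub>R (Suc i)\<^esub>"
    unfolding y_def using x xm h.hom_pow[OF x, of m] by simp
  have "m < 2 ^ m" by (rule less_exp)
  also have "(2::nat) ^ m \<le> p ^ m" using p2 by (simp add: power_mono)
  finally have mp: "m \<le> p ^ m" by simp
  have "y [^]\<^bsub>R (Suc i)\<^esub> (p ^ m) = y [^]\<^bsub>R (Suc i)\<^esub> m \<otimes>\<^bsub>R (Suc i)\<^esub> y [^]\<^bsub>R (Suc i)\<^esub> (p ^ m - m)"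
    using yc mp by (simp add: B.nat_pow_mult)
  also have "\<dots> = \<zero>\<^bsub>R (Suc i)\<^esub>" using ym yc by simp
  finally have "y = \<zero>\<^bsub>R (Suc i)\<^esub>" using redk[OF yc] by blast
  then show ?thesis using t_inj[OF x] unfolding y_def by blast
qed

end


lemma ext0_PIdl:
  assumes cr: "\<And>i. cring (R i)" and hom: "\<And>i. t i \<in> ring_hom (R i) (R (Suc i))"
    and fc: "f \<in> carrier (R 0)"
  shows "ext0 R t (PIdl\<^bsub>R 0\<^esub> f) i = PIdl\<^bsub>R i\<^esub> (tcomp t 0 i f)"
  unfolding ext0_def using Idl_image_PIdl[OF cr[of 0] cr[of i] _ fc, of "tcomp t 0 i"]
    tcomp_hom[of t R, OF hom, of 0 i] by simp

lemma ext1_PIdl: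
  assumes cr: "\<And>i. cring (R i)" and hom: "\<And>i. t i \<in> ring_hom (R i) (R (Suc i))"
    and gc: "g \<in> carrier (R 1)"
  shows "ext1 R t (PIdl\<^bsub>R 1\<^esub> g) i = PIdl\<^bsub>R (Suc i)\<^esub> (tcomp t 1 i g)"
  unfolding ext1_def using Idl_image_PIdl[OF cr[of 1] cr[of "Suc i"] _ gc, of "tcomp t 1 i"]
    tcomp_hom[of t R, OF hom, of 1 i] by simp

lemma ext0_pow_PIdl:
  assumes cr: "\<And>i. cring (R i)" and hom: "\<And>i. t i \<in> ring_hom (R i) (R (Suc i))"
    and fc: "f \<in> carrier (R 0)"
  shows "ext0 R t (idl_pow (R 0) (PIdl\<^bsub>R 0\<^esub> f) n) i = PIdl\<^bsub>R i\<^esub> (tcomp t 0 i f [^]\<^bsub>R i\<^esub> (n::nat))"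
proof -
  interpret A: cring "R 0" by (rule cr)
  have h0: "tcomp t 0 i \<in> ring_hom (R 0) (R i)" using tcomp_hom[of t R, OF hom, of 0 i] by simp
  interpret h: ring_hom_cring "R 0" "R i" "tcomp t 0 i"
    unfolding ring_hom_cring_def ring_hom_cring_axioms_def using cr h0 by auto
  have fn: "f [^]\<^bsub>R 0\<^esub> n \<in> carrier (R 0)" using fc by simp
  have "ext0 R t (idl_pow (R 0) (PIdl\<^bsub>R 0\<^esub> f) n) i = ext0 R t (PIdl\<^bsub>R 0\<^esub> (f [^]\<^bsub>R 0\<^esub> n)) i"
    using idl_pow_PIdl[OF cr fc] by simp
  also have "\<dots> = PIdl\<^bsub>R i\<^esub> (tcomp t 0 i (f [^]\<^bsub>R 0\<^esub> n))"
    by (rule ext0_PIdl[OF cr hom fn])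
  also have "tcomp t 0 i (f [^]\<^bsub>R 0\<^esub> n) = tcomp t 0 i f [^]\<^bsub>R i\<^esub> n"
    by (rule h.hom_pow[OF fc])
  finally show ?thesis .
qed

theorem corollary3p12:
  fixes p :: nat and R :: "nat \<Rightarrow> 'a ring" and t :: "nat \<Rightarrow> 'a \<Rightarrow> 'a" and I0 :: "'a set"
  assumes "preperfectoid_tower p R t I0"
    and "\<forall>i. (\<Inter>n. ext0 R t (idl_pow (R 0) I0 n) i) = {\<zero>\<^bsub>R i\<^esub>}"
  shows "\<forall>i. inj_on (t i) (carrier (R i)) \<and>
             (\<forall>x\<in>carrier (R i). \<forall>n::nat. x [^]\<^bsub>R i\<^esub> n = \<zero>\<^bsub>R i\<^esub> \<longrightarrow> x = \<zero>\<^bsub>R i\<^esub>)"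
proof -
  note D = assms(1)[unfolded preperfectoid_tower_def purely_inseparable_tower_def]
  have pr: "Factorial_Ring.prime p" using D by blast
  have cr: "\<And>i. cring (R i)" using D by blast
  have hom: "\<And>i. t i \<in> ring_hom (R i) (R (Suc i))" using D by blast
  obtain f where fc: "f \<in> carrier (R 0)" and I0: "I0 = PIdl\<^bsub>R 0\<^esub> f" using D by blast
  obtain I1 where I1: "(\<exists>g\<in>carrier (R 1). I1 = PIdl\<^bsub>R 1\<^esub> g)"
    "idl_pow (R 1) I1 p = ext0 R t I0 1"
    "\<forall>i. \<forall>y\<in>carrier (R (Suc i)). frob_rel p R t I0 i y \<zero>\<^bsub>R i\<^esub> \<longleftrightarrow>
              y \<in> ext1 R t I1 i <+>\<^bsub>R (Suc i)\<^esub> ext0 R t I0 (Suc i)"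
    using D by blast
  obtain g where gc: "g \<in> carrier (R 1)" and I1g: "I1 = PIdl\<^bsub>R 1\<^esub> g" using I1(1) by blast
  obtain Ftor where Ft: "\<forall>i.
        bij_betw (Ftor i) (tor (R (Suc i)) (ext0 R t I0 (Suc i))) (tor (R i) (ext0 R t I0 i)) \<and>
        (\<forall>y\<in>tor (R (Suc i)) (ext0 R t I0 (Suc i)). frob_rel p R t I0 i y (Ftor i y))"
    using D by blast
  have E0: "\<And>i. ext0 R t I0 i = PIdl\<^bsub>R i\<^esub> (tcomp t 0 i f)"
    using ext0_PIdl[OF cr hom fc] I0 by simp
  have E1: "\<And>i. ext1 R t I1 i = PIdl\<^bsub>R (Suc i)\<^esub> (tcomp t 1 i g)"
    using ext1_PIdl[OF cr hom gc] I1g by simp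
  have EP: "\<And>i n. ext0 R t (idl_pow (R 0) I0 n) i = PIdl\<^bsub>R i\<^esub> (tcomp t 0 i f [^]\<^bsub>R i\<^esub> (n::nat))"
    using ext0_pow_PIdl[OF cr hom fc] I0 by simp
  have f_I0: "f \<in> I0" unfolding I0 using ring.cgenideal_self[OF cring.axioms(1)[OF cr] fc] .
  have pp: "[p] \<cdot>\<^bsub>R 0\<^esub> \<one>\<^bsub>R 0\<^esub> \<in> I0" using D by blast
  have bb: "\<forall>i. \<forall>x\<in>carrier (R i). t i x \<in> ext0 R t I0 (Suc i) \<longrightarrow> x \<in> ext0 R t I0 i"
    using D by blast
  have dd: "\<forall>i. \<forall>x\<in>carrier (R i). \<exists>y\<in>carrier (R (Suc i)). frob_rel p R t I0 i y x"
    using D by blast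
  have gg: "\<forall>i. \<forall>a\<in>I0. \<forall>x\<in>tor (R i) (ext0 R t I0 i). tcomp t 0 i a \<otimes>\<^bsub>R i\<^esub> x = \<zero>\<^bsub>R i\<^esub>"
    using D by blast
  note bb' = bb[unfolded E0]
  note dd' = dd[unfolded frob_rel_def E0]
  note gg' = gg[unfolded E0]
  note kk' = I1(3)[unfolded frob_rel_def E0 E1]
  note Ft' = Ft[unfolded frob_rel_def E0]
  note sep' = assms(2)[unfolded EP]
  interpret P: PT p R t f g Ftor
  proof (rule PT.intro)
    show "Factorial_Ring.prime p" by (rule pr)
    show "\<And>i. cring (R i)" by (rule cr)
    show "\<And>i. t i \<in> ring_hom (R i) (R (Suc i))" by (rule hom)
    show "f \<in> carrier (R 0)" by (rule fc)
    show "g \<in> carrier (R 1)" by (rule gc)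
    show "add_pow (R 0) p \<one>\<^bsub>R 0\<^esub> \<in> PIdl\<^bsub>R 0\<^esub> f" using pp I0 by simp
    show "\<And>i x. x \<in> carrier (R i) \<Longrightarrow> t i x \<in> PIdl\<^bsub>R (Suc i)\<^esub> (tcomp t 0 (Suc i) f)
               \<Longrightarrow> x \<in> PIdl\<^bsub>R i\<^esub> (tcomp t 0 i f)"
      using bb' by blast
    show "\<And>i x. x \<in> carrier (R i) \<Longrightarrow> \<exists>y\<in>carrier (R (Suc i)).
               t i x \<ominus>\<^bsub>R (Suc i)\<^esub> y [^]\<^bsub>R (Suc i)\<^esub> p \<in> PIdl\<^bsub>R (Suc i)\<^esub> (tcomp t 0 (Suc i) f)"
      using dd' by blast
    show "PIdl\<^bsub>R 1\<^esub> (g [^]\<^bsub>R 1\<^esub> p) = PIdl\<^bsub>R 1\<^esub> (tcomp t 0 1 f)"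
      using I1(2) E0[of 1] idl_pow_PIdl[OF cr gc] I1g by simp
    show "\<And>i y. y \<in> carrier (R (Suc i)) \<Longrightarrow>
               (t i \<zero>\<^bsub>R i\<^esub> \<ominus>\<^bsub>R (Suc i)\<^esub> y [^]\<^bsub>R (Suc i)\<^esub> p \<in> PIdl\<^bsub>R (Suc i)\<^esub> (tcomp t 0 (Suc i) f))
               = (y \<in> (PIdl\<^bsub>R (Suc i)\<^esub> (tcomp t 1 i g)) <+>\<^bsub>R (Suc i)\<^esub> (PIdl\<^bsub>R (Suc i)\<^esub> (tcomp t 0 (Suc i) f)))"
      using kk' by blast
    show "\<And>i x. x \<in> tor (R i) (PIdl\<^bsub>R i\<^esub> (tcomp t 0 i f)) \<Longrightarrow> tcomp t 0 i f \<otimes>\<^bsub>R i\<^esub> x = \<zero>\<^bsub>R i\<^esub>"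
      using gg' f_I0 by blast
    show "\<And>i. bij_betw (Ftor i) (tor (R (Suc i)) (PIdl\<^bsub>R (Suc i)\<^esub> (tcomp t 0 (Suc i) f)))
                 (tor (R i) (PIdl\<^bsub>R i\<^esub> (tcomp t 0 i f)))"
      using Ft' by blast
    show "\<And>i y. y \<in> tor (R (Suc i)) (PIdl\<^bsub>R (Suc i)\<^esub> (tcomp t 0 (Suc i) f)) \<Longrightarrow>
               t i (Ftor i y) \<ominus>\<^bsub>R (Suc i)\<^esub> y [^]\<^bsub>R (Suc i)\<^esub> p \<in> PIdl\<^bsub>R (Suc i)\<^esub> (tcomp t 0 (Suc i) f)"
      using Ft' by blast
    show "\<And>i. (\<Inter>n. PIdl\<^bsub>R i\<^esub> (tcomp t 0 i f [^]\<^bsub>R i\<^esub> (n::nat))) = {\<zero>\<^bsub>R i\<^esub>}"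
      using sep' by blast
  qed
  show ?thesis
  proof (intro allI conjI ballI impI)
    fix i
    interpret A: cring "R i" by (rule cr)
    interpret B: cring "R (Suc i)" by (rule cr)
    interpret h: ring_hom_cring "R i" "R (Suc i)" "t i" by (rule P.Rhom)
    show "inj_on (t i) (carrier (R i))"
    proof (rule inj_onI)
      fix x y assume x: "x \<in> carrier (R i)" and y: "y \<in> carrier (R i)" and e: "t i x = t i y"
      have tyc: "t i y \<in> carrier (R (Suc i))" using y by simp
      have "t i (x \<ominus>\<^bsub>R i\<^esub> y) = \<zero>\<^bsub>R (Suc i)\<^esub>" using x y e tyc by (simp add: A.minus_eq B.r_neg)
      then have "x \<ominus>\<^bsub>R i\<^esub> y = \<zero>\<^bsub>R i\<^esub>" using P.t_inj x y by simp
      then show "x = y" using x y by simp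
    qed
    fix x n assume "x \<in> carrier (R i)" "x [^]\<^bsub>R i\<^esub> (n::nat) = \<zero>\<^bsub>R i\<^esub>"
    then show "x = \<zero>\<^bsub>R i\<^esub>" by (rule P.reduced)
  qed
qed

end
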